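(* Let $\Lambda\in\mathbb{N}$ and let $\bm{\omega}=\sum_{l=0}^{\Lambda}\sum_{h=-l}^{l}\omega_l^h\bm{\psi}_l^h\in\mathcal{H}_\Lambda$ satisfy $$\sum_{h=-l}^{l}|\omega_l^h|^2=\frac{2l+1}{(\Lambda+1)^2},\qquad l=0,1,\dots,\Lambda.$$ Then on $\mathcal{H}_\Lambda$ the resolution of the identity $$I=\frac{(\Lambda+1)^2}{8\pi^2}\int_{SO(3)}d\mu(g)\,P_g,\qquad P_g:=\bm{\omega}_g\langle\bm{\omega}_g,\cdot\rangle,\qquad \bm{\omega}_g:=\pi_\Lambda(g)\bm{\omega}$$ holds. Moreover, if $\omega_l^h=\omega_l^{-h}$ for all $l,h$, the set $\{\bm{\omega}_g\}_{g\in SO(3)}$ is mapped into itself by the unitary operator $U$ defined by $U\bm{\psi}_l^h=\bm{\psi}_l^{-h}$.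
   Context: $\mathcal{H}_\Lambda$ is a Hilbert space with orthonormal basis $\{\bm{\psi}_l^m\}_{l=0,\dots,\Lambda;\ m=-l,\dots,l}$. Operators: $L_3\bm{\psi}_l^m=m\bm{\psi}_l^m$, $L_\pm\bm{\psi}_l^m=\sqrt{(l\mp m)(l\pm m+1)}\,\bm{\psi}_l^{m\pm1}$, $L_1=(L_++L_-)/2$, $L_2=(L_+-L_-)/(2i)$. $\pi_\Lambda$ is the unitary representation of $SO(3)$ on $\mathcal{H}_\Lambda$ generated by the $L_i$: with Euler angles $(\varphi,\theta,\psi)\in[0,2\pi)\times[0,\pi]\times[0,2\pi)$, $\pi_\Lambda(g)=e^{i\varphi L_3}e^{i\theta L_2}e^{i\psi L_3}$ and $\int_{SO(3)}d\mu(g)=\int_0^{2\pi}d\varphi\int_0^\pi d\theta\sin\theta\int_0^{2\pi}d\psi$. The inner product is antilinear in the first argument. *)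

theory Defs
  imports "HOL-Analysis.Analysis"
begin

text \<open>Vectors of H_Lambda are coefficient functions on index pairs (l,m);
  psi_l^m corresponds to the indicator of (l,m).\<close>

type_synonym vec = "nat \<times> int \<Rightarrow> complex"

definition Idx :: "nat \<Rightarrow> (nat \<times> int) set" where
  "Idx \<Lambda> = {(l, m). l \<le> \<Lambda> \<and> \<bar>m\<bar> \<le> int l}"

definition HS :: "nat \<Rightarrow> vec set" where
  "HS \<Lambda> = {v. \<forall>i. i \<notin> Idx \<Lambda> \<longrightarrow> v i = 0}"

definition psi :: "nat \<Rightarrow> int \<Rightarrow> vec" where
  "psi l m = (\<lambda>i. if i = (l, m) then 1 else 0)"

definition inprod :: "nat \<Rightarrow> vec \<Rightarrow> vec \<Rightarrow> complex" where
  "inprod \<Lambda> a b = (\<Sum>i\<in>Idx \<Lambda>. cnj (a i) * b i)"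

definition L3 :: "nat \<Rightarrow> vec \<Rightarrow> vec" where
  "L3 \<Lambda> v = (\<lambda>(l, m). if (l, m) \<in> Idx \<Lambda> then of_int m * v (l, m) else 0)"

text \<open>L_+ psi_l^m = sqrt((l-m)(l+m+1)) psi_l^(m+1), so the (l,m) coefficient of L_+ v
  comes from v(l,m-1) with factor sqrt((l-m+1)(l+m)).\<close>
definition Lplus :: "nat \<Rightarrow> vec \<Rightarrow> vec" where
  "Lplus \<Lambda> v = (\<lambda>(l, m). if (l, m) \<in> Idx \<Lambda>
     then complex_of_real (sqrt (of_int ((int l - (m - 1)) * (int l + (m - 1) + 1)))) * v (l, m - 1)
     else 0)"

text \<open>L_- psi_l^m = sqrt((l+m)(l-m+1)) psi_l^(m-1).\<close>
definition Lminus :: "nat \<Rightarrow> vec \<Rightarrow> vec" where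
  "Lminus \<Lambda> v = (\<lambda>(l, m). if (l, m) \<in> Idx \<Lambda>
     then complex_of_real (sqrt (of_int ((int l + (m + 1)) * (int l - (m + 1) + 1)))) * v (l, m + 1)
     else 0)"

definition L1 :: "nat \<Rightarrow> vec \<Rightarrow> vec" where
  "L1 \<Lambda> v = (\<lambda>i. (Lplus \<Lambda> v i + Lminus \<Lambda> v i) / 2)"

definition L2 :: "nat \<Rightarrow> vec \<Rightarrow> vec" where
  "L2 \<Lambda> v = (\<lambda>i. (Lplus \<Lambda> v i - Lminus \<Lambda> v i) / (2 * \<i>))"

definition op_exp :: "(vec \<Rightarrow> vec) \<Rightarrow> vec \<Rightarrow> vec" where
  "op_exp A v = (\<lambda>i. \<Sum>k. (A ^^ k) v i / of_nat (fact k))"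

definition scaleop :: "complex \<Rightarrow> (vec \<Rightarrow> vec) \<Rightarrow> vec \<Rightarrow> vec" where
  "scaleop c A v = (\<lambda>i. c * A v i)"

text \<open>pi_Lambda(g) = e^{i phi L3} e^{i theta L2} e^{i psi L3}, g given by Euler angles.\<close>
definition repr :: "nat \<Rightarrow> real \<Rightarrow> real \<Rightarrow> real \<Rightarrow> vec \<Rightarrow> vec" where
  "repr \<Lambda> \<phi> \<theta> \<psi> v =
     op_exp (scaleop (\<i> * of_real \<phi>) (L3 \<Lambda>))
       (op_exp (scaleop (\<i> * of_real \<theta>) (L2 \<Lambda>))
         (op_exp (scaleop (\<i> * of_real \<psi>) (L3 \<Lambda>)) v))"

definition euler_angles :: "(real \<times> real \<times> real) set" where
  "euler_angles = {0..<2*pi} \<times> {0..pi} \<times> {0..<2*pi}"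

definition Uop :: "vec \<Rightarrow> vec" where
  "Uop v = (\<lambda>(l, m). v (l, - m))"

end

theory Submission
  imports Defs
begin


definition Bop :: "nat \<Rightarrow> vec \<Rightarrow> vec" where
  "Bop \<Lambda> v = (\<lambda>i. (Lplus \<Lambda> v i - Lminus \<Lambda> v i) / 2)"

definition lin :: "(vec \<Rightarrow> vec) \<Rightarrow> bool" where
  "lin A \<longleftrightarrow> (\<forall>a b v w. A (\<lambda>i. a * v i + b * w i) = (\<lambda>i. a * A v i + b * A w i))"

lemma lin_zero: "lin A \<Longrightarrow> A (\<lambda>i. 0) = (\<lambda>i. 0)"
  unfolding lin_def by (drule spec[of _ 0], drule spec[of _ 0], drule spec[of _ "\<lambda>i. 0"],
     drule spec[of _ "\<lambda>i. 0"]) simp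

lemma lin_scale: "lin A \<Longrightarrow> A (\<lambda>i. a * v i) = (\<lambda>i. a * A v i)"
  unfolding lin_def by (drule spec[of _ a], drule spec[of _ 0], drule spec[of _ v],
     drule spec[of _ v]) simp

lemma lin_D: "lin A \<Longrightarrow> A (\<lambda>i. a * v i + b * w i) = (\<lambda>i. a * A v i + b * A w i)"
  unfolding lin_def by blast

lemma lin_pow: "lin A \<Longrightarrow> lin (A ^^ k)"
  by (induction k) (auto simp: lin_def)

lemma lin_sum: assumes "lin A" "finite S"
  shows "A (\<lambda>i. \<Sum>j\<in>S. c j * u j i) = (\<lambda>i. \<Sum>j\<in>S. c j * A (u j) i)"
  using assms(2)
proof (induction S rule: finite_induct)
  case empty then show ?case using lin_zero[OF assms(1)] by simp
next
  case (insert x F)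
  have "A (\<lambda>i. \<Sum>j\<in>insert x F. c j * u j i) = A (\<lambda>i. c x * u x i + 1 * (\<Sum>j\<in>F. c j * u j i))"
    using insert by simp
  also have "\<dots> = (\<lambda>i. c x * A (u x) i + 1 * A (\<lambda>i. (\<Sum>j\<in>F. c j * u j i)) i)"
    by (rule lin_D[OF assms(1)])
  finally show ?case using insert by simp
qed

lemma lin_Bop: "lin (Bop \<Lambda>)"
  unfolding lin_def Bop_def Lplus_def Lminus_def
  by (auto simp: fun_eq_iff field_simps)

lemma lin_L3: "lin (L3 \<Lambda>)"
  unfolding lin_def L3_def
  by (auto simp: fun_eq_iff field_simps)

lemma scaleop_L2: "scaleop (\<i> * of_real t) (L2 \<Lambda>) = (\<lambda>v i. of_real t * Bop \<Lambda> v i)"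
  unfolding scaleop_def L2_def Bop_def by (auto simp: fun_eq_iff field_simps)

lemma pow_scaleop: assumes "lin A"
  shows "(scaleop c A ^^ k) v = (\<lambda>i. c ^ k * (A ^^ k) v i)"
proof (induction k)
  case 0 then show ?case by simp
next
  case (Suc k)
  have "(scaleop c A ^^ Suc k) v = scaleop c A ((scaleop c A ^^ k) v)" by simp
  also have "\<dots> = scaleop c A (\<lambda>i. c ^ k * (A ^^ k) v i)" by (simp only: Suc.IH)
  also have "\<dots> = (\<lambda>i. c ^ Suc k * (A ^^ Suc k) v i)"
    unfolding scaleop_def using lin_scale[OF assms] by (simp add: mult.assoc)
  finally show ?case .
qed

lemma pow_scaleB: "((\<lambda>v i. of_real t * Bop \<Lambda> v i) ^^ k) v = (\<lambda>i. of_real t ^ k * (Bop \<Lambda> ^^ k) v i)"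
proof (induction k)
  case 0 then show ?case by simp
next
  case (Suc k)
  then show ?case using lin_scale[OF lin_Bop, of \<Lambda> "of_real t ^ k"] by (simp add: mult.assoc)
qed

lemma sqrt_bound:
  assumes "(l, m) \<in> Idx \<Lambda>"
  shows "sqrt (of_int ((int l - (m - 1)) * (int l + (m - 1) + 1))) \<le> real \<Lambda> + 1"
    and "sqrt (of_int ((int l + (m + 1)) * (int l - (m + 1) + 1))) \<le> real \<Lambda> + 1"
    and "0 \<le> sqrt (of_int ((int l - (m - 1)) * (int l + (m - 1) + 1)))"
    and "0 \<le> sqrt (of_int ((int l + (m + 1)) * (int l - (m + 1) + 1)))"
proof -
  have lL: "l \<le> \<Lambda>" "\<bar>m\<bar> \<le> int l" using assms by (auto simp: Idx_def)
  have a: "(int l - (m - 1)) * (int l + (m - 1) + 1) \<le> (int \<Lambda> + 1)^2"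
  proof -
    have "(int l - (m - 1)) * (int l + (m - 1) + 1) \<le> (int l + 1)^2"
    proof -
      have mm: "0 \<le> m*(m-1)" by (cases "m \<ge> 1") (auto intro: mult_nonneg_nonneg mult_nonpos_nonpos)
      have "(int l - (m - 1)) * (int l + (m - 1) + 1) = (int l + 1)^2 - (int l + 1) - m*(m-1)"
        by (simp add: power2_eq_square algebra_simps)
      then show ?thesis using mm by linarith
    qed
    also have "\<dots> \<le> (int \<Lambda> + 1)^2" using lL by (intro power_mono) auto
    finally show ?thesis .
  qed
  have b: "(int l + (m + 1)) * (int l - (m + 1) + 1) \<le> (int \<Lambda> + 1)^2"
  proof -
    have "(int l + (m + 1)) * (int l - (m + 1) + 1) \<le> (int l + 1)^2"
    proof -
      have mm: "0 \<le> m*(m+1)" by (cases "m \<ge> 0") (auto intro: mult_nonneg_nonneg mult_nonpos_nonpos)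
      have "(int l + (m + 1)) * (int l - (m + 1) + 1) = (int l + 1)^2 - (int l + 1) - m*(m+1)"
        by (simp add: power2_eq_square algebra_simps)
      then show ?thesis using mm by linarith
    qed
    also have "\<dots> \<le> (int \<Lambda> + 1)^2" using lL by (intro power_mono) auto
    finally show ?thesis .
  qed
  have p1: "0 \<le> (int l - (m - 1)) * (int l + (m - 1) + 1)" using lL by auto
  have p2: "0 \<le> (int l + (m + 1)) * (int l - (m + 1) + 1)" using lL by auto
  show "sqrt (of_int ((int l - (m - 1)) * (int l + (m - 1) + 1))) \<le> real \<Lambda> + 1"
  proof (rule real_le_lsqrt)
    have "real_of_int ((int l - (m - 1)) * (int l + (m - 1) + 1)) \<le> real_of_int ((int \<Lambda> + 1)^2)"
      using a by (simp only: of_int_le_iff)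
    then show "of_int ((int l - (m - 1)) * (int l + (m - 1) + 1)) \<le> (real \<Lambda> + 1)^2" by simp
  qed simp
  show "sqrt (of_int ((int l + (m + 1)) * (int l - (m + 1) + 1))) \<le> real \<Lambda> + 1"
  proof (rule real_le_lsqrt)
    have "real_of_int ((int l + (m + 1)) * (int l - (m + 1) + 1)) \<le> real_of_int ((int \<Lambda> + 1)^2)"
      using b by (simp only: of_int_le_iff)
    then show "of_int ((int l + (m + 1)) * (int l - (m + 1) + 1)) \<le> (real \<Lambda> + 1)^2" by simp
  qed simp
  show "0 \<le> sqrt (of_int ((int l - (m - 1)) * (int l + (m - 1) + 1)))"
    using p1 by (subst real_sqrt_ge_zero) (simp_all only: of_int_0_le_iff)
  show "0 \<le> sqrt (of_int ((int l + (m + 1)) * (int l - (m + 1) + 1)))"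
    using p2 by (subst real_sqrt_ge_zero) (simp_all only: of_int_0_le_iff)
qed



lemma Bop_bound:
  assumes M: "\<forall>i. norm (v i) \<le> M"
  shows "norm (Bop \<Lambda> v i) \<le> (real \<Lambda> + 1) * M"
proof -
  obtain l m where i: "i = (l, m)" by (cases i)
  have M0: "0 \<le> M" using M norm_ge_zero order_trans by blast
  show ?thesis
  proof (cases "(l, m) \<in> Idx \<Lambda>")
    case False
    then show ?thesis using M0 by (simp add: i Bop_def Lplus_def Lminus_def)
  next
    case True
    define a where "a = sqrt (of_int ((int l - (m - 1)) * (int l + (m - 1) + 1)))"
    define b where "b = sqrt (of_int ((int l + (m + 1)) * (int l - (m + 1) + 1)))"
    have ab: "a \<le> real \<Lambda> + 1" "b \<le> real \<Lambda> + 1" "0 \<le> a" "0 \<le> b"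
      using sqrt_bound[OF True] by (simp_all add: a_def b_def)
    have eq: "Bop \<Lambda> v i = (of_real a * v (l, m - 1) - of_real b * v (l, m + 1)) / 2"
      using True by (simp add: i Bop_def Lplus_def Lminus_def a_def b_def)
    have "norm (of_real a * v (l, m - 1) - of_real b * v (l, m + 1))
          \<le> norm (of_real a * v (l, m - 1)) + norm (of_real b * v (l, m + 1))"
      by (rule norm_triangle_ineq4)
    also have "\<dots> = a * norm (v (l, m - 1)) + b * norm (v (l, m + 1))"
      using ab by (simp add: norm_mult)
    also have "\<dots> \<le> (real \<Lambda> + 1) * M + (real \<Lambda> + 1) * M"
      using ab M M0 by (intro add_mono mult_mono) auto
    finally show ?thesis unfolding eq by (simp add: norm_divide mult_ac)
  qed
qed

lemma Bop_pow_bound: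
  assumes M: "\<forall>i. norm (v i) \<le> M"
  shows "norm ((Bop \<Lambda> ^^ k) v i) \<le> (real \<Lambda> + 1) ^ k * M"
proof (induction k arbitrary: i)
  case 0 then show ?case using M[rule_format, of i] by simp
next
  case (Suc k)
  have "norm ((Bop \<Lambda> ^^ Suc k) v i) = norm (Bop \<Lambda> ((Bop \<Lambda> ^^ k) v) i)" by simp
  also have "\<dots> \<le> (real \<Lambda> + 1) * ((real \<Lambda> + 1) ^ k * M)"
    using Suc by (intro Bop_bound) auto
  finally show ?case by (simp add: mult.assoc)
qed

definition realv :: "vec \<Rightarrow> bool" where "realv v \<longleftrightarrow> (\<forall>i. Im (v i) = 0)"

lemma realv_Bop: "realv v \<Longrightarrow> realv (Bop \<Lambda> v)"
  unfolding realv_def Bop_def Lplus_def Lminus_def by (auto split: prod.splits)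

lemma realv_Bop_pow: "realv v \<Longrightarrow> realv ((Bop \<Lambda> ^^ k) v)"
  by (induction k) (auto intro: realv_Bop)

definition dser :: "nat \<Rightarrow> vec \<Rightarrow> nat \<times> int \<Rightarrow> real \<Rightarrow> real" where
  "dser \<Lambda> v i t = (\<Sum>k. (Re ((Bop \<Lambda> ^^ k) v i) / fact k) * t ^ k)"

lemma dser_summable:
  assumes M: "\<forall>i. norm (v i) \<le> M"
  shows "summable (\<lambda>k. (Re ((Bop \<Lambda> ^^ k) v i) / fact k) * y ^ k)"
proof (rule summable_comparison_test')
  show "summable (\<lambda>k. M * (inverse (fact k) * ((real \<Lambda> + 1) * \<bar>y\<bar>) ^ k))"
    by (intro summable_mult summable_exp)
  fix k :: nat
  have "norm ((Re ((Bop \<Lambda> ^^ k) v i) / fact k) * y ^ k)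
        \<le> (norm ((Bop \<Lambda> ^^ k) v i) / fact k) * \<bar>y\<bar> ^ k"
    by (simp add: abs_mult power_abs abs_Re_le_cmod divide_right_mono mult_right_mono)
  also have "\<dots> \<le> ((real \<Lambda> + 1) ^ k * M / fact k) * \<bar>y\<bar> ^ k"
    by (intro mult_right_mono divide_right_mono Bop_pow_bound[OF M]) auto
  also have "\<dots> = M * (inverse (fact k) * ((real \<Lambda> + 1) * \<bar>y\<bar>) ^ k)"
    by (simp add: power_mult_distrib divide_inverse mult_ac)
  finally show "norm ((Re ((Bop \<Lambda> ^^ k) v i) / fact k) * y ^ k)
        \<le> M * (inverse (fact k) * ((real \<Lambda> + 1) * \<bar>y\<bar>) ^ k)" .
qed

lemma dser_deriv:
  assumes M: "\<forall>i. norm (v i) \<le> M"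
  shows "(dser \<Lambda> v i has_real_derivative dser \<Lambda> (Bop \<Lambda> v) i t) (at t)"
proof -
  have M': "\<forall>i. norm (Bop \<Lambda> v i) \<le> (real \<Lambda> + 1) * M" using Bop_bound[OF M] by auto
  have d: "diffs (\<lambda>k. Re ((Bop \<Lambda> ^^ k) v i) / fact k) = (\<lambda>k. Re ((Bop \<Lambda> ^^ k) (Bop \<Lambda> v) i) / fact k)"
  proof
    fix k
    have "(Bop \<Lambda> ^^ Suc k) v = (Bop \<Lambda> ^^ k) (Bop \<Lambda> v)" by (simp add: funpow_Suc_right del: funpow.simps)
    then show "diffs (\<lambda>k. Re ((Bop \<Lambda> ^^ k) v i) / fact k) k = Re ((Bop \<Lambda> ^^ k) (Bop \<Lambda> v) i) / fact k"
    proof -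
      have nz: "real (Suc k) \<noteq> 0" "fact k \<noteq> (0::real)" by auto
      show ?thesis unfolding diffs_def fact_Suc \<open>(Bop \<Lambda> ^^ Suc k) v = (Bop \<Lambda> ^^ k) (Bop \<Lambda> v)\<close>
        using nz by (simp add: field_simps del: of_nat_Suc funpow.simps)
    qed
  qed
  have "((\<lambda>x. \<Sum>n. (Re ((Bop \<Lambda> ^^ n) v i) / fact n) * x^n) has_field_derivative
          (\<Sum>n. diffs (\<lambda>k. Re ((Bop \<Lambda> ^^ k) v i) / fact k) n * t^n)) (at t)"
    by (rule termdiffs_strong_converges_everywhere) (rule dser_summable[OF M])
  then show ?thesis unfolding d dser_def by simp
qed

definition Ex :: "nat \<Rightarrow> real \<Rightarrow> vec \<Rightarrow> vec" where
  "Ex \<Lambda> t v = op_exp (scaleop (\<i> * of_real t) (L2 \<Lambda>)) v"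

lemma Ex_eq: "Ex \<Lambda> t v i = (\<Sum>k. of_real t ^ k * (Bop \<Lambda> ^^ k) v i / of_nat (fact k))"
  unfolding Ex_def op_exp_def scaleop_L2 pow_scaleB by simp

lemma Ex_dser:
  assumes M: "\<forall>i. norm (v i) \<le> M" and r: "realv v"
  shows "Ex \<Lambda> t v i = of_real (dser \<Lambda> v i t)"
proof -
  have eqk: "\<And>k. of_real t ^ k * (Bop \<Lambda> ^^ k) v i / of_nat (fact k)
           = of_real ((Re ((Bop \<Lambda> ^^ k) v i) / fact k) * t ^ k)"
  proof -
    fix k
    have "Im ((Bop \<Lambda> ^^ k) v i) = 0" using realv_Bop_pow[OF r] unfolding realv_def by blast
    then have "(Bop \<Lambda> ^^ k) v i = of_real (Re ((Bop \<Lambda> ^^ k) v i))" by (simp add: complex_eq_iff)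
    then show "of_real t ^ k * (Bop \<Lambda> ^^ k) v i / of_nat (fact k)
           = of_real ((Re ((Bop \<Lambda> ^^ k) v i) / fact k) * t ^ k)"
      by (metis (no_types, lifting) of_real_divide of_real_mult of_real_of_nat_eq of_real_power of_nat_fact
          mult.commute times_divide_eq_left)
  qed
  have "Ex \<Lambda> t v i = (\<Sum>k. of_real ((Re ((Bop \<Lambda> ^^ k) v i) / fact k) * t ^ k))"
    unfolding Ex_eq eqk by (rule refl)
  also have "\<dots> = of_real (dser \<Lambda> v i t)"
    unfolding dser_def by (rule suminf_of_real[symmetric]) (rule dser_summable[OF M])
  finally show ?thesis .
qed



lemma tele_int:
  fixes f :: "int \<Rightarrow> real"
  assumes "a \<le> b + 1"
  shows "(\<Sum>h\<in>{a..b}. f h - f (h - 1)) = f b - f (a - 1)"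
proof -
  have "a - 1 \<le> b" using assms by simp
  then show ?thesis
  proof (induction b rule: int_ge_induct)
    case base then show ?case by simp
  next
    case (step i)
    have "{a..i+1} = insert (1+i) {a..i}" using step(1) by (subst add.commute) (rule atLeastAtMostPlus1_int_conv, simp)
    then have "(\<Sum>h\<in>{a..i+1}. f h - f (h - 1)) = (f (i+1) - f i) + (\<Sum>h\<in>{a..i}. f h - f (h - 1))"
      by (simp add: add.commute)
    also have "\<dots> = f (i + 1) - f (a - 1)" using step by simp
    finally show ?case .
  qed
qed

lemma energy_const:
  fixes k :: "int \<Rightarrow> real \<Rightarrow> real" and c :: "int \<Rightarrow> real" and L :: int
  assumes D: "\<And>h t. h \<in> {-L..L} \<Longrightarrow> (k h has_real_derivative (c h * k (h+1) t - c (h-1) * k (h-1) t)/2) (at t)"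
    and cL: "c L = 0" "c (-L-1) = 0"
  shows "(\<Sum>h\<in>{-L..L}. (k h t)^2) = (\<Sum>h\<in>{-L..L}. (k h s)^2)"
proof (cases "-L \<le> L + 1")
  case False then show ?thesis by simp
next
  case True
  have "\<forall>x. ((\<lambda>t. \<Sum>h\<in>{-L..L}. (k h t)^2) has_real_derivative 0) (at x)"
  proof
    fix x
    have "((\<lambda>t. \<Sum>h\<in>{-L..L}. (k h t)^2) has_real_derivative
           (\<Sum>h\<in>{-L..L}. 2 * k h x * ((c h * k (h+1) x - c (h-1) * k (h-1) x)/2))) (at x)"
      by (intro DERIV_sum) (auto intro!: derivative_eq_intros D)
    also have "(\<Sum>h\<in>{-L..L}. 2 * k h x * ((c h * k (h+1) x - c (h-1) * k (h-1) x)/2))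
        = (\<Sum>h\<in>{-L..L}. (c h * k h x * k (h+1) x) - (c (h-1) * k (h-1) x * k (h - 1 + 1) x))"
      by (intro sum.cong) (auto simp: field_simps)
    also have "\<dots> = c L * k L x * k (L+1) x - c (-L-1) * k (-L-1) x * k (-L-1+1) x"
      using tele_int[of "-L" L "\<lambda>h. c h * k h x * k (h+1) x"] True by simp
    also have "\<dots> = 0" using cL by simp
    finally show "((\<lambda>t. \<Sum>h\<in>{-L..L}. (k h t)^2) has_real_derivative 0) (at x)" .
  qed
  then show ?thesis by (rule DERIV_isconst_all)
qed

lemma uniq_zero:
  fixes k :: "int \<Rightarrow> real \<Rightarrow> real" and c :: "int \<Rightarrow> real" and L :: int
  assumes D: "\<And>h t. h \<in> {-L..L} \<Longrightarrow> (k h has_real_derivative (c h * k (h+1) t - c (h-1) * k (h-1) t)/2) (at t)"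
    and cL: "c L = 0" "c (-L-1) = 0"
    and z: "\<And>h. h \<in> {-L..L} \<Longrightarrow> k h 0 = 0"
    and h: "h \<in> {-L..L}"
  shows "k h t = 0"
proof -
  have "(\<Sum>h\<in>{-L..L}. (k h t)^2) = (\<Sum>h\<in>{-L..L}. (k h 0)^2)"
    by (rule energy_const[OF D cL])
  also have "\<dots> = 0" using z by simp
  finally have "\<forall>h\<in>{-L..L}. (k h t)^2 = 0"
    by (subst sum_nonneg_eq_0_iff[symmetric]) auto
  then show ?thesis using h by simp
qed

lemma star_rel:
  fixes x :: "int \<Rightarrow> real \<Rightarrow> real" and c :: "int \<Rightarrow> real" and L m :: int
  assumes D1: "\<And>h t. (x h has_real_derivative (c h * x (h+1) t - c (h-1) * x (h-1) t)/2) (at t)"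
    and cL: "c L = 0" "c (-L-1) = 0"
    and csq: "\<And>h. h \<in> {-L..L} \<Longrightarrow> (c h)^2 - (c (h-1))^2 = -2 * of_int h"
    and init: "\<And>h. h \<in> {-L..L} \<Longrightarrow> x h 0 = (if h = m then 1 else 0)"
    and h: "h \<in> {-L..L}"
  shows "sin t * (c h * x (h+1) t + c (h-1) * x (h-1) t) = 2 * (of_int m - of_int h * cos t) * x h t"
proof -
  define k where "k h t = 2 * (of_int m - of_int h * cos t) * x h t - sin t * (c h * x (h+1) t + c (h-1) * x (h-1) t)" for h t
  have Dk: "(k h has_real_derivative (c h * k (h+1) t - c (h-1) * k (h-1) t)/2) (at t)"
    if hh: "h \<in> {-L..L}" for h t
  proof -
    have d: "(k h has_real_derivative
       2 * (of_int h * sin t) * x h t + 2 * (of_int m - of_int h * cos t) * ((c h * x (h+1) t - c (h-1) * x (h-1) t)/2)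
       - (cos t * (c h * x (h+1) t + c (h-1) * x (h-1) t)
          + sin t * (c h * ((c (h+1) * x (h+1+1) t - c (h+1-1) * x (h+1-1) t)/2)
                     + c (h-1) * ((c (h-1) * x (h-1+1) t - c (h-1-1) * x (h-1-1) t)/2)))) (at t)"
      unfolding k_def[abs_def]
      by (auto intro!: derivative_eq_intros D1 simp: field_simps)
    have e: "2 * (of_int h * sin t) * x h t + 2 * (of_int m - of_int h * cos t) * ((c h * x (h+1) t - c (h-1) * x (h-1) t)/2)
       - (cos t * (c h * x (h+1) t + c (h-1) * x (h-1) t)
          + sin t * (c h * ((c (h+1) * x (h+1+1) t - c (h+1-1) * x (h+1-1) t)/2)
                     + c (h-1) * ((c (h-1) * x (h-1+1) t - c (h-1-1) * x (h-1-1) t)/2)))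
       = (c h * k (h+1) t - c (h-1) * k (h-1) t)/2 + sin t * x h t * ((c h)^2 - (c (h-1))^2 + 2 * of_int h)"
      unfolding k_def by (simp add: field_simps power2_eq_square)
    have z: "(c h)^2 - (c (h-1))^2 + 2 * of_int h = 0" using csq[OF hh] by simp
    show ?thesis using d unfolding e z mult_zero_right add_0_right .
  qed
  have "k h t = 0"
    by (rule uniq_zero[OF Dk cL _ h]) (auto simp: k_def init)
  then show ?thesis unfolding k_def by simp
qed

lemma row_norm:
  fixes x :: "int \<Rightarrow> real \<Rightarrow> real" and c :: "int \<Rightarrow> real" and L m :: int
  assumes D1: "\<And>h t. (x h has_real_derivative (c h * x (h+1) t - c (h-1) * x (h-1) t)/2) (at t)"
    and cL: "c L = 0" "c (-L-1) = 0"
    and init: "\<And>h. h \<in> {-L..L} \<Longrightarrow> x h 0 = (if h = m then 1 else 0)"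
    and m: "m \<in> {-L..L}"
  shows "(\<Sum>h\<in>{-L..L}. (x h t)^2) = 1"
proof -
  have "(\<Sum>h\<in>{-L..L}. (x h t)^2) = (\<Sum>h\<in>{-L..L}. (x h 0)^2)"
    by (rule energy_const[OF D1 cL])
  also have "\<dots> = (\<Sum>h\<in>{-L..L}. if h = m then 1 else 0)"
    by (intro sum.cong) (auto simp: init)
  also have "\<dots> = 1" using m by simp
  finally show ?thesis .
qed



lemma cont_of_deriv:
  assumes "\<And>t. (f has_real_derivative f' t) (at t)"
  shows "continuous_on S f"
  by (meson DERIV_isCont assms continuous_at_imp_continuous_on)

lemma G_int:
  fixes p q :: "int \<Rightarrow> real \<Rightarrow> real" and c c' :: "int \<Rightarrow> real" and m h :: int
  assumes Dp: "\<And>h t. (p h has_real_derivative (c h * p (h+1) t - c (h-1) * p (h-1) t)/2) (at t)"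
    and Dq: "\<And>h t. (q h has_real_derivative (c' h * q (h+1) t - c' (h-1) * q (h-1) t)/2) (at t)"
    and Sp: "\<And>t. sin t * (c h * p (h+1) t + c (h-1) * p (h-1) t) = 2 * (of_int m - of_int h * cos t) * p h t"
    and Sq: "\<And>t. sin t * (c' (h+1) * q (h+1+1) t + c' (h+1-1) * q (h+1-1) t) = 2 * (of_int m - of_int (h+1) * cos t) * q (h+1) t"
  shows "((\<lambda>t. sin t * (c h * p (h+1) t * q (h+1) t - c' h * p h t * q h t)) has_integral 0) {0..pi}"
proof -
  define F where "F t = sin t * p h t * q (h+1) t" for t
  have dF: "(F has_real_derivative sin t * (c h * p (h+1) t * q (h+1) t - c' h * p h t * q h t)) (at t)" for t
  proof -
    have d: "(F has_real_derivative cos t * p h t * q (h+1) t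
          + sin t * ((c h * p (h+1) t - c (h-1) * p (h-1) t)/2) * q (h+1) t
          + sin t * p h t * ((c' (h+1) * q (h+1+1) t - c' (h+1-1) * q (h+1-1) t)/2)) (at t)"
      unfolding F_def[abs_def] by (auto intro!: derivative_eq_intros Dp Dq simp: field_simps)
    have e: "cos t * p h t * q (h+1) t
          + sin t * ((c h * p (h+1) t - c (h-1) * p (h-1) t)/2) * q (h+1) t
          + sin t * p h t * ((c' (h+1) * q (h+1+1) t - c' (h+1-1) * q (h+1-1) t)/2)
        = sin t * (c h * p (h+1) t * q (h+1) t - c' h * p h t * q h t)
          - (q (h+1) t / 2) * (sin t * (c h * p (h+1) t + c (h-1) * p (h-1) t) - 2 * (of_int m - of_int h * cos t) * p h t)
          + (p h t / 2) * (sin t * (c' (h+1) * q (h+1+1) t + c' (h+1-1) * q (h+1-1) t) - 2 * (of_int m - of_int (h+1) * cos t) * q (h+1) t)"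
      by (simp add: field_simps)
    show ?thesis using d unfolding e Sp Sq by simp
  qed
  have "((\<lambda>t. sin t * (c h * p (h+1) t * q (h+1) t - c' h * p h t * q h t)) has_integral (F pi - F 0)) {0..pi}"
    by (rule fundamental_theorem_of_calculus)
       (auto intro: has_field_derivative_at_within dF simp: has_real_derivative_iff_has_vector_derivative[symmetric])
  then show ?thesis by (simp add: F_def)
qed

definition Jint :: "(int \<Rightarrow> real \<Rightarrow> real) \<Rightarrow> (int \<Rightarrow> real \<Rightarrow> real) \<Rightarrow> int \<Rightarrow> real" where
  "Jint p q h = integral {0..pi} (\<lambda>t. sin t * p h t * q h t)"

lemma G_J:
  fixes p q :: "int \<Rightarrow> real \<Rightarrow> real" and c c' :: "int \<Rightarrow> real" and m h :: int
  assumes Dp: "\<And>h t. (p h has_real_derivative (c h * p (h+1) t - c (h-1) * p (h-1) t)/2) (at t)"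
    and Dq: "\<And>h t. (q h has_real_derivative (c' h * q (h+1) t - c' (h-1) * q (h-1) t)/2) (at t)"
    and Sp: "\<And>t. sin t * (c h * p (h+1) t + c (h-1) * p (h-1) t) = 2 * (of_int m - of_int h * cos t) * p h t"
    and Sq: "\<And>t. sin t * (c' (h+1) * q (h+1+1) t + c' (h+1-1) * q (h+1-1) t) = 2 * (of_int m - of_int (h+1) * cos t) * q (h+1) t"
  shows "c h * Jint p q (h+1) = c' h * Jint p q h"
proof -
  have cp: "continuous_on {0..pi} (p k)" for k by (rule cont_of_deriv[OF Dp])
  have cq: "continuous_on {0..pi} (q k)" for k by (rule cont_of_deriv[OF Dq])
  have int: "(\<lambda>t. sin t * p k t * q k t) integrable_on {0..pi}" for k
    by (intro integrable_continuous_interval continuous_intros cp cq)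
  have "integral {0..pi} (\<lambda>t. sin t * (c h * p (h+1) t * q (h+1) t - c' h * p h t * q h t)) = 0"
    using G_int[OF Dp Dq Sp Sq] by (rule integral_unique)
  moreover have "integral {0..pi} (\<lambda>t. sin t * (c h * p (h+1) t * q (h+1) t - c' h * p h t * q h t))
      = integral {0..pi} (\<lambda>t. c h * (sin t * p (h+1) t * q (h+1) t) - c' h * (sin t * p h t * q h t))"
    by (simp add: algebra_simps)
  moreover have i1: "(\<lambda>t. c h * (sin t * p (h+1) t * q (h+1) t)) integrable_on {0..pi}"
    using integrable_cmul[OF int, of "c h"] by simp
  moreover have i2: "(\<lambda>t. c' h * (sin t * p h t * q h t)) integrable_on {0..pi}"
    using integrable_cmul[OF int, of "c' h"] by simp
  moreover have "integral {0..pi} (\<lambda>t. c h * (sin t * p (h+1) t * q (h+1) t) - c' h * (sin t * p h t * q h t)) = c h * Jint p q (h+1) - c' h * Jint p q h"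
    unfolding Jint_def using i1 i2
    by (subst integral_diff) (auto simp: integral_mult_right)
  ultimately show ?thesis by simp
qed



lemma integral_sin_0_pi: "integral {0..pi} sin = 2"
proof -
  have "(sin has_integral ((- cos pi) - (- cos 0))) {0..pi}"
    by (rule fundamental_theorem_of_calculus)
       (auto intro!: derivative_eq_intros simp: has_real_derivative_iff_has_vector_derivative[symmetric])
  then show ?thesis by (simp add: integral_unique)
qed

lemma norm_J:
  fixes x :: "int \<Rightarrow> real \<Rightarrow> real" and c :: "int \<Rightarrow> real" and L m :: int
  assumes D1: "\<And>h t. (x h has_real_derivative (c h * x (h+1) t - c (h-1) * x (h-1) t)/2) (at t)"
    and S: "\<And>h t. h \<in> {-L..L} \<Longrightarrow> sin t * (c h * x (h+1) t + c (h-1) * x (h-1) t) = 2 * (of_int m - of_int h * cos t) * x h t"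
    and cnz: "\<And>h. h \<in> {-L..L-1} \<Longrightarrow> c h \<noteq> 0"
    and rn: "\<And>t. (\<Sum>h\<in>{-L..L}. (x h t)^2) = 1"
    and L: "0 \<le> L"
    and h: "h \<in> {-L..L}"
  shows "Jint x x h = 2 / (2 * of_int L + 1)"
proof -
  have step: "Jint x x (h+1) = Jint x x h" if hh: "h \<in> {-L..L-1}" for h
  proof -
    have "c h * Jint x x (h+1) = c h * Jint x x h"
      by (rule G_J[OF D1 D1, of h m]) (use S[of h] S[of "h+1"] hh in \<open>auto\<close>)
    then show ?thesis using cnz[OF hh] by simp
  qed
  have const: "Jint x x (-L + int n) = Jint x x (-L)" if "int n \<le> 2 * L" for n :: nat
    using that
  proof (induction n)
    case 0 then show ?case by simp
  next
    case (Suc n)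
    have "-L + int (Suc n) = -L + int n + 1" by simp
    then have "Jint x x (-L + int (Suc n)) = Jint x x (-L + int n + 1)" by (rule arg_cong)
    also have "\<dots> = Jint x x (-L + int n)" using Suc.prems by (intro step) auto
    also have "\<dots> = Jint x x (-L)" using Suc by simp
    finally show ?case .
  qed
  have allc: "Jint x x k = Jint x x (-L)" if "k \<in> {-L..L}" for k
    using const[of "nat (k + L)"] that by simp
  have cx: "continuous_on {0..pi} (x k)" for k by (rule cont_of_deriv[OF D1])
  have int: "(\<lambda>t. sin t * x k t * x k t) integrable_on {0..pi}" for k
    by (intro integrable_continuous_interval continuous_intros cx)
  have "(\<Sum>k\<in>{-L..L}. Jint x x k) = integral {0..pi} (\<lambda>t. \<Sum>k\<in>{-L..L}. sin t * x k t * x k t)"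
    unfolding Jint_def by (rule integral_sum[symmetric]) (auto intro: int)
  also have "\<dots> = integral {0..pi} sin"
  proof -
    have "(\<Sum>k\<in>{-L..L}. sin t * x k t * x k t) = sin t" for t
      using rn[of t] by (simp add: sum_distrib_left[symmetric] power2_eq_square mult.assoc)
    then show ?thesis by simp
  qed
  also have "\<dots> = 2" by (rule integral_sin_0_pi)
  finally have "(\<Sum>k\<in>{-L..L}. Jint x x k) = 2" .
  moreover have "(\<Sum>k\<in>{-L..L}. Jint x x k) = (\<Sum>k\<in>{-L..L}. Jint x x (-L))"
    by (rule sum.cong) (simp_all only: allc)
  moreover have "(\<Sum>k\<in>{-L..L}. Jint x x (-L)) = (2 * of_int L + 1) * Jint x x (-L)"
    using L by simp
  ultimately have "(2 * of_int L + 1) * Jint x x (-L) = 2" by linarith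
  then have "Jint x x (-L) = 2 / (2 * of_int L + 1)" using L by (simp add: field_simps)
  then show ?thesis using allc[OF h] by simp
qed

lemma cross_J:
  fixes p q :: "int \<Rightarrow> real \<Rightarrow> real" and c c' :: "int \<Rightarrow> real" and L L' m :: int
  assumes Dp: "\<And>h t. (p h has_real_derivative (c h * p (h+1) t - c (h-1) * p (h-1) t)/2) (at t)"
    and Dq: "\<And>h t. (q h has_real_derivative (c' h * q (h+1) t - c' (h-1) * q (h-1) t)/2) (at t)"
    and Sp: "\<And>h t. h \<in> {-L..L} \<Longrightarrow> sin t * (c h * p (h+1) t + c (h-1) * p (h-1) t) = 2 * (of_int m - of_int h * cos t) * p h t"
    and Sq: "\<And>h t. h \<in> {-L'..L'} \<Longrightarrow> sin t * (c' h * q (h+1) t + c' (h-1) * q (h-1) t) = 2 * (of_int m - of_int h * cos t) * q h t"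
    and cL: "c L = 0"
    and cnz: "\<And>h. h \<in> {-L'..L'-1} \<Longrightarrow> c' h \<noteq> 0"
    and LL: "0 \<le> L" "L < L'"
    and h: "h \<in> {-L..L}"
  shows "Jint p q h = 0"
proof -
  have G: "c k * Jint p q (k+1) = c' k * Jint p q k" if k: "k \<in> {-L..L}" for k
    by (rule G_J[OF Dp Dq, of k m]) (use Sp[of k] Sq[of "k+1"] k LL in \<open>auto\<close>)
  have "Jint p q (L - int n) = 0" if "int n \<le> 2 * L" for n :: nat
    using that
  proof (induction n)
    case 0
    have "c' L * Jint p q L = 0" using G[of L] cL LL by simp
    moreover have "c' L \<noteq> 0" using LL by (intro cnz) auto
    ultimately show ?case by simp
  next
    case (Suc n)
    have k: "L - int (Suc n) \<in> {-L..L}" using Suc.prems LL by auto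
    have "c' (L - int (Suc n)) * Jint p q (L - int (Suc n)) = c (L - int (Suc n)) * Jint p q (L - int (Suc n) + 1)"
      using G[OF k] by simp
    also have "L - int (Suc n) + 1 = L - int n" by simp
    also have "Jint p q (L - int n) = 0" using Suc by simp
    finally have "c' (L - int (Suc n)) * Jint p q (L - int (Suc n)) = 0" by simp
    moreover have "c' (L - int (Suc n)) \<noteq> 0" using Suc.prems LL by (intro cnz) auto
    ultimately show ?case by simp
  qed
  from this[of "nat (L - h)"] h show ?thesis by simp
qed



definition cc :: "nat \<Rightarrow> int \<Rightarrow> real" where
  "cc l h = sqrt (of_int ((int l - h) * (int l + h + 1)))"

lemma cc_top: "cc l (int l) = 0" and cc_bot: "cc l (- int l - 1) = 0"
  by (simp_all add: cc_def)

lemma cc_sym: "cc l (- h) = cc l (h - 1)"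
  unfolding cc_def by (simp add: algebra_simps)

lemma cc_sq: assumes "h \<in> {- int l - 1..int l}" shows "(cc l h)^2 = of_int ((int l - h) * (int l + h + 1))"
proof -
  have "0 \<le> (int l - h) * (int l + h + 1)" using assms by auto
  then have "0 \<le> real_of_int ((int l - h) * (int l + h + 1))" by (simp only: of_int_0_le_iff)
  then show ?thesis unfolding cc_def by (rule real_sqrt_pow2)
qed

lemma cc_diff: assumes "h \<in> {- int l..int l}" shows "(cc l h)^2 - (cc l (h-1))^2 = -2 * of_int h"
proof -
  have "(cc l h)^2 = of_int ((int l - h) * (int l + h + 1))" using assms by (intro cc_sq) auto
  moreover have "(cc l (h-1))^2 = of_int ((int l - (h-1)) * (int l + (h-1) + 1))" using assms by (intro cc_sq) auto
  ultimately show ?thesis by (simp add: algebra_simps)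
qed

lemma cc_nz: assumes "h \<in> {- int l..int l - 1}" shows "cc l h \<noteq> 0"
proof -
  have "0 < (int l - h) * (int l + h + 1)" using assms by auto
  then have "0 < real_of_int ((int l - h) * (int l + h + 1))" by (simp only: of_int_0_less_iff)
  then show ?thesis unfolding cc_def using real_sqrt_gt_zero by force
qed

lemma cc_alt: "cc l (h - 1) = sqrt (of_int ((int l + h) * (int l - h + 1)))"
  unfolding cc_def by (simp add: algebra_simps)

lemma psi_bound: "\<forall>i. norm (psi l h i) \<le> 1"
  by (simp add: psi_def)

lemma psi_real: "realv (psi l h)"
  by (simp add: psi_def realv_def)

lemma Bop_psi:
  assumes "(l, h) \<in> Idx \<Lambda>"
  shows "Bop \<Lambda> (psi l h) = (\<lambda>i. of_real (cc l h / 2) * psi l (h+1) i + of_real (- cc l (h-1) / 2) * psi l (h-1) i)"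
proof
  fix i :: "nat \<times> int"
  obtain l' m' where i: "i = (l', m')" by (cases i)
  have lh: "l \<le> \<Lambda>" "\<bar>h\<bar> \<le> int l" using assms by (auto simp: Idx_def)
  show "Bop \<Lambda> (psi l h) i = of_real (cc l h / 2) * psi l (h+1) i + of_real (- cc l (h-1) / 2) * psi l (h-1) i"
  proof (cases "(l', m') \<in> Idx \<Lambda>")
    case True
    have "Bop \<Lambda> (psi l h) i = (of_real (sqrt (of_int ((int l' - (m' - 1)) * (int l' + (m' - 1) + 1)))) * psi l h (l', m' - 1)
         - of_real (sqrt (of_int ((int l' + (m' + 1)) * (int l' - (m' + 1) + 1)))) * psi l h (l', m' + 1)) / 2"
      using True by (simp add: i Bop_def Lplus_def Lminus_def)
    also have "\<dots> = of_real (cc l h / 2) * psi l (h+1) i + of_real (- cc l (h-1) / 2) * psi l (h-1) i"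
    proof (cases "l' = l \<and> (m' = h + 1 \<or> m' = h - 1)")
      case True
      then show ?thesis
      proof (elim conjE disjE)
        assume a: "l' = l" "m' = h + 1"
        then show ?thesis by (simp add: i psi_def cc_def)
      next
        assume a: "l' = l" "m' = h - 1"
        then show ?thesis by (simp add: i psi_def cc_alt)
      qed
    next
      case False
      then show ?thesis by (auto simp: i psi_def)
    qed
    finally show ?thesis .
  next
    case False
    then have "Bop \<Lambda> (psi l h) i = 0" by (simp add: i Bop_def Lplus_def Lminus_def)
    moreover have "of_real (cc l h / 2) * psi l (h+1) i = 0"
    proof (cases "i = (l, h+1)")
      case True
      then have "h = int l" using False lh by (auto simp: i Idx_def)
      then show ?thesis by (simp add: cc_top)
    qed (simp add: psi_def)
    moreover have "of_real (- cc l (h-1) / 2) * psi l (h-1) i = 0"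
    proof (cases "i = (l, h-1)")
      case True
      then have "h = - int l" using False lh by (auto simp: i Idx_def)
      then show ?thesis using cc_bot[of l] by simp
    qed (simp add: psi_def)
    ultimately show ?thesis by (metis add.right_neutral)
  qed
qed

lemma Bop_psi_out:
  assumes "\<not> \<bar>h\<bar> \<le> int l"
  shows "Bop \<Lambda> (psi l h) = (\<lambda>i. 0)"
proof
  fix i :: "nat \<times> int"
  obtain l' m' where i: "i = (l', m')" by (cases i)
  show "Bop \<Lambda> (psi l h) i = 0"
  proof (cases "(l', m') \<in> Idx \<Lambda>")
    case False then show ?thesis by (simp add: i Bop_def Lplus_def Lminus_def)
  next
    case True
    then have m': "\<bar>m'\<bar> \<le> int l'" by (simp add: Idx_def)
    have a: "of_real (sqrt (of_int ((int l' - (m' - 1)) * (int l' + (m' - 1) + 1)))) * psi l h (l', m' - 1) = (0::complex)"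
    proof (cases "l' = l \<and> m' - 1 = h")
      case True
      then have "m' = - int l" using m' assms by auto
      then show ?thesis using True by simp
    qed (auto simp: psi_def)
    have b: "of_real (sqrt (of_int ((int l' + (m' + 1)) * (int l' - (m' + 1) + 1)))) * psi l h (l', m' + 1) = (0::complex)"
    proof (cases "l' = l \<and> m' + 1 = h")
      case True
      then have "m' = int l" using m' assms by auto
      then show ?thesis using True by simp
    qed (auto simp: psi_def)
    have "Bop \<Lambda> (psi l h) i = (of_real (sqrt (of_int ((int l' - (m' - 1)) * (int l' + (m' - 1) + 1)))) * psi l h (l', m' - 1)
         - of_real (sqrt (of_int ((int l' + (m' + 1)) * (int l' - (m' + 1) + 1)))) * psi l h (l', m' + 1)) / 2"
      using True by (simp add: i Bop_def Lplus_def Lminus_def)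
    then show ?thesis unfolding a b by simp
  qed
qed

lemma dser_lin:
  assumes u: "\<forall>i. norm (u i) \<le> M" and w: "\<forall>i. norm (w i) \<le> N"
  shows "dser \<Lambda> (\<lambda>i. of_real a * u i + of_real b * w i) j t = a * dser \<Lambda> u j t + b * dser \<Lambda> w j t"
proof -
  have p: "(Bop \<Lambda> ^^ k) (\<lambda>i. of_real a * u i + of_real b * w i) = (\<lambda>i. of_real a * (Bop \<Lambda> ^^ k) u i + of_real b * (Bop \<Lambda> ^^ k) w i)" for k
    by (rule lin_D[OF lin_pow[OF lin_Bop]])
  have "dser \<Lambda> (\<lambda>i. of_real a * u i + of_real b * w i) j t
      = (\<Sum>k. a * ((Re ((Bop \<Lambda> ^^ k) u j) / fact k) * t ^ k) + b * ((Re ((Bop \<Lambda> ^^ k) w j) / fact k) * t ^ k))"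
    unfolding dser_def p by (simp add: algebra_simps add_divide_distrib)
  also have "\<dots> = (\<Sum>k. a * ((Re ((Bop \<Lambda> ^^ k) u j) / fact k) * t ^ k)) + (\<Sum>k. b * ((Re ((Bop \<Lambda> ^^ k) w j) / fact k) * t ^ k))"
    by (intro suminf_add[symmetric] summable_mult dser_summable[OF u] dser_summable[OF w])
  also have "\<dots> = a * dser \<Lambda> u j t + b * dser \<Lambda> w j t"
    unfolding dser_def by (simp only: suminf_mult[OF dser_summable[OF u]] suminf_mult[OF dser_summable[OF w]])
  finally show ?thesis .
qed

definition X :: "nat \<Rightarrow> nat \<Rightarrow> int \<Rightarrow> int \<Rightarrow> real \<Rightarrow> real" where
  "X \<Lambda> l m h t = dser \<Lambda> (psi l h) (l, m) t"

lemma X_out: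
  assumes "\<not> \<bar>h\<bar> \<le> int l" "\<bar>m\<bar> \<le> int l"
  shows "X \<Lambda> l m h t = 0"
proof -
  have "(Bop \<Lambda> ^^ k) (psi l h) (l, m) = 0" for k
  proof (cases k)
    case 0 then show ?thesis using assms by (auto simp: psi_def)
  next
    case (Suc k')
    then have "(Bop \<Lambda> ^^ k) (psi l h) = (Bop \<Lambda> ^^ k') (Bop \<Lambda> (psi l h))"
      by (simp add: funpow_Suc_right del: funpow.simps)
    also have "\<dots> = (\<lambda>i. 0)" unfolding Bop_psi_out[OF assms(1)] by (rule lin_zero[OF lin_pow[OF lin_Bop]])
    finally show ?thesis by simp
  qed
  then show ?thesis by (simp add: X_def dser_def)
qed

lemma X_init: "X \<Lambda> l m h 0 = (if h = m then 1 else 0)"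
  unfolding X_def dser_def powser_zero by (simp add: psi_def)

lemma X_D1:
  assumes "l \<le> \<Lambda>" "\<bar>m\<bar> \<le> int l"
  shows "(X \<Lambda> l m h has_real_derivative (cc l h * X \<Lambda> l m (h+1) t - cc l (h-1) * X \<Lambda> l m (h-1) t)/2) (at t)"
proof (cases "\<bar>h\<bar> \<le> int l")
  case True
  then have idx: "(l, h) \<in> Idx \<Lambda>" using assms by (simp add: Idx_def)
  have "(X \<Lambda> l m h has_real_derivative dser \<Lambda> (Bop \<Lambda> (psi l h)) (l, m) t) (at t)"
    unfolding X_def[abs_def] by (rule dser_deriv[OF psi_bound])
  also have "dser \<Lambda> (Bop \<Lambda> (psi l h)) (l, m) t = (cc l h / 2) * X \<Lambda> l m (h+1) t + (- cc l (h-1) / 2) * X \<Lambda> l m (h-1) t"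
    unfolding Bop_psi[OF idx] X_def by (rule dser_lin[OF psi_bound psi_bound])
  also have "\<dots> = (cc l h * X \<Lambda> l m (h+1) t - cc l (h-1) * X \<Lambda> l m (h-1) t)/2"
    by (simp add: field_simps)
  finally show ?thesis .
next
  case False
  have z: "X \<Lambda> l m h = (\<lambda>t. 0)" using X_out[OF False assms(2)] by auto
  have "cc l h * X \<Lambda> l m (h+1) t = 0"
  proof (cases "\<bar>h+1\<bar> \<le> int l")
    case True
    then have "h = - int l - 1" using False by auto
    then show ?thesis by (simp add: cc_bot)
  qed (simp add: X_out assms)
  moreover have "cc l (h-1) * X \<Lambda> l m (h-1) t = 0"
  proof (cases "\<bar>h-1\<bar> \<le> int l")
    case True
    then have "h - 1 = int l" using False by auto
    then show ?thesis by (simp add: cc_top)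
  qed (simp add: X_out assms)
  ultimately have e: "(cc l h * X \<Lambda> l m (h+1) t - cc l (h-1) * X \<Lambda> l m (h-1) t)/2 = 0" by (simp only: diff_self)
  show ?thesis unfolding e z by (rule DERIV_const)
qed



context
  fixes \<Lambda> l :: nat and m :: int
  assumes lL: "l \<le> \<Lambda>" and ml: "\<bar>m\<bar> \<le> int l"
begin

lemma X_D1': "\<And>h t. (X \<Lambda> l m h has_real_derivative (cc l h * X \<Lambda> l m (h+1) t - cc l (h-1) * X \<Lambda> l m (h-1) t)/2) (at t)"
  by (rule X_D1[OF lL ml])

lemma X_S:
  assumes "h \<in> {- int l..int l}"
  shows "sin t * (cc l h * X \<Lambda> l m (h+1) t + cc l (h-1) * X \<Lambda> l m (h-1) t) = 2 * (of_int m - of_int h * cos t) * X \<Lambda> l m h t"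
  by (rule star_rel[OF X_D1' cc_top _ cc_diff _ assms]) (auto simp: X_init cc_bot)

lemma X_rn: "(\<Sum>h\<in>{- int l..int l}. (X \<Lambda> l m h t)^2) = 1"
  by (rule row_norm[OF X_D1' cc_top _ _, of m]) (use ml in \<open>auto simp: X_init cc_bot\<close>)

lemma X_Jnorm:
  assumes "h \<in> {- int l..int l}"
  shows "Jint (X \<Lambda> l m) (X \<Lambda> l m) h = 2 / (2 * real l + 1)"
  using norm_J[OF X_D1' X_S cc_nz X_rn _ assms] by simp

end

lemma X_Jcross_lt:
  assumes "l \<le> \<Lambda>" "l' \<le> \<Lambda>" "l < l'" "\<bar>m\<bar> \<le> int l" "\<bar>h\<bar> \<le> int l"
  shows "Jint (X \<Lambda> l m) (X \<Lambda> l' m) h = 0"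
proof -
  have m': "\<bar>m\<bar> \<le> int l'" using assms by auto
  show ?thesis
    by (rule cross_J[OF X_D1'[OF assms(1) assms(4)] X_D1'[OF assms(2) m'] X_S[OF assms(1) assms(4)] X_S[OF assms(2) m'] cc_top cc_nz])
       (use assms in auto)
qed

lemma Jint_comm: "Jint p q h = Jint q p h"
  unfolding Jint_def by (simp add: mult_ac)

lemma X_Jcross:
  assumes "l \<le> \<Lambda>" "l' \<le> \<Lambda>" "l \<noteq> l'" "\<bar>m\<bar> \<le> int l" "\<bar>m\<bar> \<le> int l'" "\<bar>h\<bar> \<le> int l" "\<bar>h\<bar> \<le> int l'"
  shows "Jint (X \<Lambda> l m) (X \<Lambda> l' m) h = 0"
proof (cases "l < l'")
  case True then show ?thesis using X_Jcross_lt assms by blast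
next
  case False
  then have "l' < l" using assms by simp
  then show ?thesis using X_Jcross_lt[of l' \<Lambda> l m h] assms Jint_comm by metis
qed

definition sg :: "int \<Rightarrow> real" where "sg n = (-1) powi n"

lemma sg_plus1: "sg (n + 1) = - sg n"
  unfolding sg_def by (subst power_int_add_1) auto

lemma sg_minus1: "sg (n - 1) = - sg n"
  using sg_plus1[of "n - 1"] by simp

lemma sg_0: "sg 0 = 1" by (simp add: sg_def)

lemma sg_sq: "sg n * sg n = 1" by (simp add: sg_def)

lemma X_sym:
  assumes lL: "l \<le> \<Lambda>" and ml: "\<bar>m\<bar> \<le> int l" and h: "h \<in> {- int l..int l}"
  shows "X \<Lambda> l (- m) (- h) t = sg (m - h) * X \<Lambda> l m h t"
proof -
  have ml': "\<bar>- m\<bar> \<le> int l" using ml by simp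
  define k where "k h t = sg (m - h) * X \<Lambda> l (- m) (- h) t - X \<Lambda> l m h t" for h t
  have Dk: "(k h has_real_derivative (cc l h * k (h+1) t - cc l (h-1) * k (h-1) t)/2) (at t)" for h t
  proof -
    have d: "(k h has_real_derivative sg (m - h) * ((cc l (- h) * X \<Lambda> l (- m) (- h + 1) t - cc l (- h - 1) * X \<Lambda> l (- m) (- h - 1) t)/2)
          - (cc l h * X \<Lambda> l m (h+1) t - cc l (h-1) * X \<Lambda> l m (h-1) t)/2) (at t)"
      unfolding k_def[abs_def]
      by (auto intro!: derivative_eq_intros X_D1[OF lL ml'] X_D1[OF lL ml] simp: field_simps)
    have c1: "cc l (- h) = cc l (h - 1)" by (rule cc_sym)
    have c2: "cc l (- h - 1) = cc l h" using cc_sym[of l "h + 1"] by simp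
    have s1: "sg (m - (h + 1)) = - sg (m - h)" using sg_minus1[of "m - h"] by (simp add: algebra_simps)
    have s2: "sg (m - (h - 1)) = - sg (m - h)" using sg_plus1[of "m - h"] by (simp add: algebra_simps)
    have e1: "- (h + 1) = - h - 1" "- (h - 1) = - h + 1" by simp_all
    show ?thesis using d unfolding k_def c1 c2 s1 s2 e1 by (rule DERIV_cong) (simp add: field_simps)
  qed
  have "k h t = 0"
    by (rule uniq_zero[OF Dk cc_top cc_bot _ h]) (auto simp: k_def X_init sg_0)
  then have "sg (m - h) * X \<Lambda> l (- m) (- h) t = X \<Lambda> l m h t" by (simp add: k_def)
  then have "sg (m - h) * (sg (m - h) * X \<Lambda> l (- m) (- h) t) = sg (m - h) * X \<Lambda> l m h t" by simp
  then show ?thesis by (simp add: mult.assoc[symmetric] sg_sq)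
qed



lemma Ex_summable:
  assumes M: "\<forall>i. norm (v i) \<le> M"
  shows "summable (\<lambda>k. of_real t ^ k * (Bop \<Lambda> ^^ k) v i / of_nat (fact k))"
proof (rule summable_comparison_test')
  show "summable (\<lambda>k. M * (inverse (fact k) * ((real \<Lambda> + 1) * \<bar>t\<bar>) ^ k))"
    by (intro summable_mult summable_exp)
  fix k :: nat
  have "norm (of_real t ^ k * (Bop \<Lambda> ^^ k) v i / of_nat (fact k))
        = \<bar>t\<bar> ^ k * norm ((Bop \<Lambda> ^^ k) v i) / fact k"
    by (simp add: norm_mult norm_divide norm_power)
  also have "\<dots> \<le> \<bar>t\<bar> ^ k * ((real \<Lambda> + 1) ^ k * M) / fact k"
    by (intro divide_right_mono mult_left_mono Bop_pow_bound[OF M]) auto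
  also have "\<dots> = M * (inverse (fact k) * ((real \<Lambda> + 1) * \<bar>t\<bar>) ^ k)"
    by (simp add: power_mult_distrib divide_inverse mult_ac)
  finally show "norm (of_real t ^ k * (Bop \<Lambda> ^^ k) v i / of_nat (fact k))
        \<le> M * (inverse (fact k) * ((real \<Lambda> + 1) * \<bar>t\<bar>) ^ k)" .
qed

lemma Ex_sum:
  assumes S: "finite S" and M: "\<And>j. j \<in> S \<Longrightarrow> \<forall>i. norm (u j i) \<le> M"
  shows "Ex \<Lambda> t (\<lambda>i. \<Sum>j\<in>S. c j * u j i) i = (\<Sum>j\<in>S. c j * Ex \<Lambda> t (u j) i)"
proof -
  have p: "(Bop \<Lambda> ^^ k) (\<lambda>i. \<Sum>j\<in>S. c j * u j i) = (\<lambda>i. \<Sum>j\<in>S. c j * (Bop \<Lambda> ^^ k) (u j) i)" for k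
    by (rule lin_sum[OF lin_pow[OF lin_Bop] S])
  have "Ex \<Lambda> t (\<lambda>i. \<Sum>j\<in>S. c j * u j i) i
      = (\<Sum>k. \<Sum>j\<in>S. c j * (of_real t ^ k * (Bop \<Lambda> ^^ k) (u j) i / of_nat (fact k)))"
    unfolding Ex_eq p by (simp add: sum_distrib_left sum_divide_distrib mult_ac)
  also have "\<dots> = (\<Sum>j\<in>S. \<Sum>k. c j * (of_real t ^ k * (Bop \<Lambda> ^^ k) (u j) i / of_nat (fact k)))"
  proof (rule suminf_sum)
    fix j assume j: "j \<in> S"
    show "summable (\<lambda>k. c j * (of_real t ^ k * (Bop \<Lambda> ^^ k) (u j) i / of_nat (fact k)))"
      by (intro summable_mult Ex_summable[OF M[OF j]])
  qed
  also have "\<dots> = (\<Sum>j\<in>S. c j * Ex \<Lambda> t (u j) i)"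
    unfolding Ex_eq by (rule sum.cong[OF refl], rule suminf_mult, rule Ex_summable, erule M)
  finally show ?thesis .
qed

lemma finite_Idx: "finite (Idx \<Lambda>)"
proof -
  have "Idx \<Lambda> \<subseteq> {0..\<Lambda>} \<times> {- int \<Lambda>..int \<Lambda>}" by (auto simp: Idx_def)
  then show ?thesis by (rule finite_subset) auto
qed

lemma HS_decomp: "w \<in> HS \<Lambda> \<Longrightarrow> w = (\<lambda>i. \<Sum>j\<in>Idx \<Lambda>. w j * psi (fst j) (snd j) i)"
proof
  fix i assume w: "w \<in> HS \<Lambda>"
  have "(\<Sum>j\<in>Idx \<Lambda>. w j * psi (fst j) (snd j) i) = (\<Sum>j\<in>Idx \<Lambda>. if j = i then w j else 0)"
    by (intro sum.cong) (auto simp: psi_def)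
  also have "\<dots> = (if i \<in> Idx \<Lambda> then w i else 0)" using finite_Idx by (simp add: sum.delta')
  also have "\<dots> = w i" using w by (cases i) (auto simp: HS_def)
  finally show "w i = (\<Sum>j\<in>Idx \<Lambda>. w j * psi (fst j) (snd j) i)" by simp
qed

definition blk :: "nat \<Rightarrow> vec \<Rightarrow> bool" where "blk l v \<longleftrightarrow> (\<forall>l' m. l' \<noteq> l \<longrightarrow> v (l', m) = 0)"

lemma blk_Bop: "blk l v \<Longrightarrow> blk l (Bop \<Lambda> v)"
  unfolding blk_def Bop_def Lplus_def Lminus_def by auto

lemma blk_Bop_pow: "blk l v \<Longrightarrow> blk l ((Bop \<Lambda> ^^ k) v)"
  by (induction k) (auto intro: blk_Bop)

lemma Ex_psi_other: "l' \<noteq> l \<Longrightarrow> Ex \<Lambda> t (psi l h) (l', m) = 0"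
proof -
  assume "l' \<noteq> l"
  moreover have "blk l (psi l h)" by (auto simp: blk_def psi_def)
  ultimately have "(Bop \<Lambda> ^^ k) (psi l h) (l', m) = 0" for k
    using blk_Bop_pow[where \<Lambda>=\<Lambda> and k=k] unfolding blk_def by blast
  then show ?thesis unfolding Ex_eq by simp
qed

lemma Ex_psi_same: "Ex \<Lambda> t (psi l h) (l, m) = of_real (X \<Lambda> l m h t)"
  unfolding X_def by (rule Ex_dser[OF psi_bound psi_real])

lemma Ex_HS:
  assumes w: "w \<in> HS \<Lambda>" and lm: "(l, m) \<in> Idx \<Lambda>"
  shows "Ex \<Lambda> t w (l, m) = (\<Sum>h\<in>{- int l..int l}. w (l, h) * of_real (X \<Lambda> l m h t))"
proof -
  have "Ex \<Lambda> t w (l, m) = (\<Sum>j\<in>Idx \<Lambda>. w j * Ex \<Lambda> t (psi (fst j) (snd j)) (l, m))"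
    by (subst HS_decomp[OF w], rule Ex_sum[OF finite_Idx psi_bound])
  also have "\<dots> = (\<Sum>j\<in>(\<lambda>h. (l, h)) ` {- int l..int l}. w j * Ex \<Lambda> t (psi (fst j) (snd j)) (l, m))"
  proof (rule sum.mono_neutral_right[OF finite_Idx])
    show "(\<lambda>h. (l, h)) ` {- int l..int l} \<subseteq> Idx \<Lambda>" using lm by (auto simp: Idx_def)
    show "\<forall>j\<in>Idx \<Lambda> - (\<lambda>h. (l, h)) ` {- int l..int l}. w j * Ex \<Lambda> t (psi (fst j) (snd j)) (l, m) = 0"
    proof
      fix j assume j: "j \<in> Idx \<Lambda> - (\<lambda>h. (l, h)) ` {- int l..int l}"
      then have "fst j \<noteq> l" by (cases j) (auto simp: Idx_def image_iff)
      then show "w j * Ex \<Lambda> t (psi (fst j) (snd j)) (l, m) = 0" using Ex_psi_other by auto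
    qed
  qed
  also have "\<dots> = (\<Sum>h\<in>{- int l..int l}. w (l, h) * of_real (X \<Lambda> l m h t))"
    by (subst sum.reindex) (auto simp: inj_on_def Ex_psi_same)
  finally show ?thesis .
qed

lemma Ex_out:
  assumes "i \<notin> Idx \<Lambda>"
  shows "Ex \<Lambda> t v i = v i"
proof -
  have "(Bop \<Lambda> ^^ k) v i = (if k = 0 then v i else 0)" for k
  proof (cases k)
    case (Suc k') then show ?thesis using assms by (cases i) (simp add: Bop_def Lplus_def Lminus_def)
  qed simp
  then have "Ex \<Lambda> t v i = (\<Sum>k. if k = 0 then v i else 0)"
    unfolding Ex_eq by (intro suminf_cong) auto
  also have "\<dots> = v i" using sums_single[of 0 "\<lambda>_. v i"] sums_unique by (simp add: sums_unique[symmetric])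
  finally show ?thesis .
qed

definition E3 :: "nat \<Rightarrow> real \<Rightarrow> vec \<Rightarrow> vec" where
  "E3 \<Lambda> a v = op_exp (scaleop (\<i> * of_real a) (L3 \<Lambda>)) v"

lemma L3_pow: "(L3 \<Lambda> ^^ k) v (l, m) = (if (l, m) \<in> Idx \<Lambda> then of_int m ^ k * v (l, m) else if k = 0 then v (l, m) else 0)"
  by (induction k) (auto simp: L3_def)

lemma E3_eq: "E3 \<Lambda> a v (l, m) = (if (l, m) \<in> Idx \<Lambda> then exp (\<i> * of_real a * of_int m) * v (l, m) else v (l, m))"
proof -
  have pw: "(scaleop (\<i> * of_real a) (L3 \<Lambda>) ^^ k) v (l, m) = (\<i> * of_real a) ^ k * (L3 \<Lambda> ^^ k) v (l, m)" for k
    by (simp add: pow_scaleop[OF lin_L3])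
  show ?thesis
  proof (cases "(l, m) \<in> Idx \<Lambda>")
    case True
    have "(\<lambda>k. (\<i> * of_real a * of_int m) ^ k /\<^sub>R fact k * v (l, m)) sums (exp (\<i> * of_real a * of_int m) * v (l, m))"
      by (intro sums_mult2 exp_converges)
    moreover have "(\<lambda>k. (\<i> * of_real a * of_int m) ^ k /\<^sub>R fact k * v (l, m))
        = (\<lambda>k. (scaleop (\<i> * of_real a) (L3 \<Lambda>) ^^ k) v (l, m) / of_nat (fact k))"
      using True by (auto simp: pw L3_pow scaleR_conv_of_real power_mult_distrib field_simps)
    ultimately show ?thesis using True by (simp add: E3_def op_exp_def sums_unique[symmetric])
  next
    case False
    have "(\<lambda>k. (scaleop (\<i> * of_real a) (L3 \<Lambda>) ^^ k) v (l, m) / of_nat (fact k)) = (\<lambda>k. if k = 0 then v (l, m) else 0)"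
      using False by (auto simp: pw L3_pow)
    then show ?thesis using False sums_single[of 0 "\<lambda>_. v (l, m)"]
      by (simp add: E3_def op_exp_def sums_unique[symmetric])
  qed
qed

lemma repr_E: "repr \<Lambda> a b c v = E3 \<Lambda> a (Ex \<Lambda> b (E3 \<Lambda> c v))"
  by (simp add: repr_def E3_def Ex_def)

definition Rf :: "nat \<Rightarrow> vec \<Rightarrow> real \<Rightarrow> real \<Rightarrow> real \<Rightarrow> nat \<Rightarrow> int \<Rightarrow> complex" where
  "Rf \<Lambda> w a b c l m = exp (\<i> * of_real a * of_int m) *
     (\<Sum>h\<in>{- int l..int l}. exp (\<i> * of_real c * of_int h) * w (l, h) * of_real (X \<Lambda> l m h b))"

lemma repr_formula:
  assumes w: "w \<in> HS \<Lambda>"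
  shows "repr \<Lambda> a b c w (l, m) = (if (l, m) \<in> Idx \<Lambda> then Rf \<Lambda> w a b c l m else 0)"
proof -
  have w3: "E3 \<Lambda> c w \<in> HS \<Lambda>" using w by (auto simp: HS_def E3_eq)
  show ?thesis
  proof (cases "(l, m) \<in> Idx \<Lambda>")
    case True
    have "repr \<Lambda> a b c w (l, m) = exp (\<i> * of_real a * of_int m) * Ex \<Lambda> b (E3 \<Lambda> c w) (l, m)"
      using True by (simp add: repr_E E3_eq)
    also have "Ex \<Lambda> b (E3 \<Lambda> c w) (l, m) = (\<Sum>h\<in>{- int l..int l}. E3 \<Lambda> c w (l, h) * of_real (X \<Lambda> l m h b))"
      by (rule Ex_HS[OF w3 True])
    also have "\<dots> = (\<Sum>h\<in>{- int l..int l}. exp (\<i> * of_real c * of_int h) * w (l, h) * of_real (X \<Lambda> l m h b))"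
      using True by (intro sum.cong refl) (auto simp: E3_eq Idx_def)
    finally show ?thesis using True by (simp add: Rf_def)
  next
    case False
    then show ?thesis using w w3 by (simp add: repr_E E3_eq Ex_out HS_def)
  qed
qed



definition ee :: "int \<Rightarrow> real \<Rightarrow> complex" where "ee n x = exp (\<i> * of_real x * of_int n)"

lemma cont_ee: "continuous_on S (ee n)"
  unfolding ee_def by (intro continuous_intros)

lemma ee_prod: "ee a x * cnj (ee b x) = exp (\<i> * of_real x * of_int (a - b))"
proof -
  have "cnj (ee b x) = exp (- (\<i> * of_real x * of_int b))"
    unfolding ee_def exp_cnj by simp
  then show ?thesis unfolding ee_def by (simp add: exp_add[symmetric] algebra_simps)
qed

lemma int_exp:
  fixes n :: int
  shows "((\<lambda>x. exp (\<i> * of_real x * of_int n)) has_integral (if n = 0 then 2 * of_real pi else 0)) {0..2*pi}"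
proof (cases "n = 0")
  case True
  then show ?thesis using has_integral_const_real[of "1::complex" 0 "2*pi"]
    by (simp add: scaleR_conv_of_real)
next
  case False
  define F where "F x = exp (\<i> * of_real x * of_int n) / (\<i> * of_int n)" for x :: real
  have d: "(F has_vector_derivative exp (\<i> * of_real x * of_int n)) (at x within {0..2*pi})" for x
  proof -
    have "((\<lambda>z. exp (\<i> * z * of_int n) / (\<i> * of_int n)) has_field_derivative
           exp (\<i> * of_real x * of_int n)) (at (of_real x))"
      using False by (auto intro!: derivative_eq_intros)
    then show ?thesis unfolding F_def by (rule has_vector_derivative_real_field)
  qed
  have "((\<lambda>x. exp (\<i> * of_real x * of_int n)) has_integral (F (2*pi) - F 0)) {0..2*pi}"
    by (rule fundamental_theorem_of_calculus) (auto intro: d)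
  moreover have "exp (\<i> * of_real (2*pi) * of_int n) = 1"
  proof -
    have "exp (\<i> * of_real (2*pi) * of_int n) = exp (\<i> * (of_int n * (of_real pi * 2)))"
      by (simp add: mult_ac)
    also have "\<dots> = 1" by (rule exp_2pi_1_int)
    finally show ?thesis .
  qed
  ultimately show ?thesis using False by (simp add: F_def)
qed

lemma int_ee: "((\<lambda>x. ee a x * cnj (ee b x)) has_integral (if a = b then 2 * of_real pi else 0)) {0..2*pi}"
  unfolding ee_prod using int_exp[of "a - b"] by simp

lemma euler_closed: "cbox (0::real, 0::real, 0::real) (2*pi, pi, 2*pi) = {0..2*pi} \<times> {0..pi} \<times> {0..2*pi}"
  by (simp add: cbox_Pair_eq)

lemma triple:
  fixes f g k :: "real \<Rightarrow> complex"
  assumes cf: "continuous_on UNIV f" and cg: "continuous_on UNIV g" and ck: "continuous_on UNIV k"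
    and If: "(f has_integral A) {0..2*pi}" and Ig: "(g has_integral B) {0..pi}" and Ik: "(k has_integral C) {0..2*pi}"
  shows "((\<lambda>(x, y, z). f x * g y * k z) has_integral (A * B * C)) euler_angles"
proof -
  define F where "F = (\<lambda>(x, y, z). f x * g y * k z)"
  have cF: "continuous_on S F" for S
  proof -
    have "continuous_on UNIV (\<lambda>p. f (fst p) * g (fst (snd p)) * k (snd (snd p)))"
      by (intro continuous_intros continuous_on_compose2[OF cf] continuous_on_compose2[OF cg] continuous_on_compose2[OF ck]) auto
    moreover have "F = (\<lambda>p. f (fst p) * g (fst (snd p)) * k (snd (snd p)))"
      by (auto simp: F_def fun_eq_iff split: prod.splits)
    ultimately show ?thesis by (metis continuous_on_subset subset_UNIV)
  qed
  have cG: "continuous_on S (\<lambda>q. g (fst q) * k (snd q))" for S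
  proof -
    have "continuous_on UNIV (\<lambda>q. g (fst q) * k (snd q))"
      by (intro continuous_intros continuous_on_compose2[OF cg] continuous_on_compose2[OF ck]) auto
    then show ?thesis by (metis continuous_on_subset subset_UNIV)
  qed
  have inner2: "integral (cbox (0::real, 0::real) (pi, 2*pi)) (\<lambda>q. g (fst q) * k (snd q)) = B * C"
  proof -
    have "integral (cbox (0::real, 0::real) (pi, 2*pi)) (\<lambda>q. g (fst q) * k (snd q))
        = integral (cbox 0 pi) (\<lambda>y. integral (cbox 0 (2*pi)) (\<lambda>z. g y * k z))"
      using integral_prod_continuous[OF cG] by simp
    also have "\<dots> = integral (cbox 0 pi) (\<lambda>y. g y * C)"
      using Ik by (simp add: integral_mult_right integral_unique)
    also have "\<dots> = B * C"
      using Ig by (simp add: integral_mult_left integral_unique)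
    finally show ?thesis .
  qed
  have "integral (cbox (0::real, 0::real, 0::real) (2*pi, pi, 2*pi)) F
      = integral (cbox 0 (2*pi)) (\<lambda>x. integral (cbox (0, 0) (pi, 2*pi)) (\<lambda>q. F (x, q)))"
    by (rule integral_prod_continuous[OF cF])
  also have "\<dots> = integral (cbox 0 (2*pi)) (\<lambda>x. f x * (B * C))"
  proof -
    have "integral (cbox (0::real, 0::real) (pi, 2*pi)) (\<lambda>q. F (x, q)) = f x * (B * C)" for x
    proof -
      have "(\<lambda>q. F (x, q)) = (\<lambda>q. f x * (g (fst q) * k (snd q)))"
        by (auto simp: F_def fun_eq_iff split: prod.splits)
      then show ?thesis using inner2 by (simp add: integral_mult_right)
    qed
    then show ?thesis by simp
  qed
  also have "\<dots> = A * B * C"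
    using If by (simp add: integral_mult_left integral_unique mult.assoc)
  finally have "(F has_integral A * B * C) (cbox (0::real, 0::real, 0::real) (2*pi, pi, 2*pi))"
    using integrable_continuous[OF cF] by (metis integrable_integral)
  then have "(F has_integral A * B * C) ({0..2*pi} \<times> {0..pi} \<times> {0..2*pi})"
    unfolding euler_closed .
  moreover have "negligible {x \<in> ({0..2*pi} \<times> {0..pi} \<times> {0..2*pi}) - euler_angles. F x \<noteq> 0}"
  proof (rule negligible_subset)
    show "negligible ({p. (1::real, 0::real, 0::real) \<bullet> p = 2*pi} \<union> {p. (0::real, 0::real, 1::real) \<bullet> p = 2*pi})"
      by (intro negligible_Un negligible_hyperplane) auto
    show "{x \<in> ({0..2*pi} \<times> {0..pi} \<times> {0..2*pi}) - euler_angles. F x \<noteq> 0}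
        \<subseteq> {p. (1::real, 0::real, 0::real) \<bullet> p = 2*pi} \<union> {p. (0::real, 0::real, 1::real) \<bullet> p = 2*pi}"
      by (auto simp: euler_angles_def)
  qed
  moreover have "negligible {x \<in> euler_angles - ({0..2*pi} \<times> {0..pi} \<times> {0..2*pi}). F x \<noteq> 0}"
    by (rule negligible_subset[of "{}"]) (auto simp: euler_angles_def)
  ultimately have "(F has_integral A * B * C) euler_angles"
    using has_integral_spike_set_eq by blast
  then show ?thesis by (simp add: F_def)
qed



lemma cont_X: "l \<le> \<Lambda> \<Longrightarrow> \<bar>m\<bar> \<le> int l \<Longrightarrow> continuous_on S (X \<Lambda> l m h)"
  by (rule cont_of_deriv[OF X_D1])

lemma Rf_ee: "Rf \<Lambda> w a b c l m = ee m a * (\<Sum>h\<in>{- int l..int l}. ee h c * w (l, h) * of_real (X \<Lambda> l m h b))"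
  by (simp add: Rf_def ee_def)

lemma expand:
  "of_real (C * sin b) * (Rf \<Lambda> w a b c l m * cnj (Rf \<Lambda> w a b c l' m'))
   = (\<Sum>h\<in>{- int l..int l}. \<Sum>h'\<in>{- int l'..int l'}.
        (of_real C * w (l, h) * cnj (w (l', h'))) *
        (ee m a * cnj (ee m' a) * of_real (sin b * X \<Lambda> l m h b * X \<Lambda> l' m' h' b) * (ee h c * cnj (ee h' c))))"
  unfolding Rf_ee by (simp add: sum_product sum_distrib_left mult_ac) (rule sum.swap)

lemma pair_integral:
  assumes lL: "l \<le> \<Lambda>" "l' \<le> \<Lambda>" and ml: "\<bar>m\<bar> \<le> int l" "\<bar>m'\<bar> \<le> int l'"
  shows "((\<lambda>(a, b, c). of_real (C * sin b) * (Rf \<Lambda> w a b c l m * cnj (Rf \<Lambda> w a b c l' m'))) has_integral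
     (\<Sum>h\<in>{- int l..int l}. \<Sum>h'\<in>{- int l'..int l'}.
        (of_real C * w (l, h) * cnj (w (l', h'))) *
        ((if m = m' then 2 * of_real pi else 0) *
         of_real (integral {0..pi} (\<lambda>b. sin b * X \<Lambda> l m h b * X \<Lambda> l' m' h' b)) *
         (if h = h' then 2 * of_real pi else 0)))) euler_angles"
proof -
  have tm: "((\<lambda>(a, b, c). ee m a * cnj (ee m' a) * of_real (sin b * X \<Lambda> l m h b * X \<Lambda> l' m' h' b) * (ee h c * cnj (ee h' c)))
      has_integral ((if m = m' then 2 * of_real pi else 0) *
         of_real (integral {0..pi} (\<lambda>b. sin b * X \<Lambda> l m h b * X \<Lambda> l' m' h' b)) *
         (if h = h' then 2 * of_real pi else 0))) euler_angles" for h h'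
  proof (rule triple)
    show "continuous_on UNIV (\<lambda>a. ee m a * cnj (ee m' a))"
      by (intro continuous_intros cont_ee)
    show "continuous_on UNIV (\<lambda>c. ee h c * cnj (ee h' c))"
      by (intro continuous_intros cont_ee)
    have cr: "continuous_on UNIV (\<lambda>b. sin b * X \<Lambda> l m h b * X \<Lambda> l' m' h' b)"
      by (intro continuous_intros cont_X lL ml)
    show "continuous_on UNIV (\<lambda>b. complex_of_real (sin b * X \<Lambda> l m h b * X \<Lambda> l' m' h' b))"
      by (intro continuous_intros cont_X lL ml)
    show "((\<lambda>a. ee m a * cnj (ee m' a)) has_integral (if m = m' then 2 * of_real pi else 0)) {0..2 * pi}"
      by (rule int_ee)
    show "((\<lambda>c. ee h c * cnj (ee h' c)) has_integral (if h = h' then 2 * of_real pi else 0)) {0..2 * pi}"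
      by (rule int_ee)
    have "(\<lambda>b. sin b * X \<Lambda> l m h b * X \<Lambda> l' m' h' b) integrable_on {0..pi}"
      by (rule integrable_continuous_interval) (rule continuous_on_subset[OF cr], simp)
    then show "((\<lambda>b. complex_of_real (sin b * X \<Lambda> l m h b * X \<Lambda> l' m' h' b)) has_integral
        of_real (integral {0..pi} (\<lambda>b. sin b * X \<Lambda> l m h b * X \<Lambda> l' m' h' b))) {0..pi}"
      by (intro has_integral_of_real integrable_integral)
  qed
  have "((\<lambda>x. \<Sum>h\<in>{- int l..int l}. \<Sum>h'\<in>{- int l'..int l'}.
        (of_real C * w (l, h) * cnj (w (l', h'))) *
        ((\<lambda>(a, b, c). ee m a * cnj (ee m' a) * of_real (sin b * X \<Lambda> l m h b * X \<Lambda> l' m' h' b) * (ee h c * cnj (ee h' c))) x))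
     has_integral
     (\<Sum>h\<in>{- int l..int l}. \<Sum>h'\<in>{- int l'..int l'}.
        (of_real C * w (l, h) * cnj (w (l', h'))) *
        ((if m = m' then 2 * of_real pi else 0) *
         of_real (integral {0..pi} (\<lambda>b. sin b * X \<Lambda> l m h b * X \<Lambda> l' m' h' b)) *
         (if h = h' then 2 * of_real pi else 0)))) euler_angles"
    by (intro has_integral_sum finite_atLeastAtMost_int has_integral_mult_right tm)
  moreover have "(\<lambda>x. \<Sum>h\<in>{- int l..int l}. \<Sum>h'\<in>{- int l'..int l'}.
        (of_real C * w (l, h) * cnj (w (l', h'))) *
        ((\<lambda>(a, b, c). ee m a * cnj (ee m' a) * of_real (sin b * X \<Lambda> l m h b * X \<Lambda> l' m' h' b) * (ee h c * cnj (ee h' c))) x))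
     = (\<lambda>(a, b, c). of_real (C * sin b) * (Rf \<Lambda> w a b c l m * cnj (Rf \<Lambda> w a b c l' m')))"
  proof (rule ext)
    fix x :: "real \<times> real \<times> real"
    obtain a b c where x: "x = (a, b, c)" by (cases x) auto
    show "(\<Sum>h\<in>{- int l..int l}. \<Sum>h'\<in>{- int l'..int l'}.
        (of_real C * w (l, h) * cnj (w (l', h'))) *
        ((\<lambda>(a, b, c). ee m a * cnj (ee m' a) * of_real (sin b * X \<Lambda> l m h b * X \<Lambda> l' m' h' b) * (ee h c * cnj (ee h' c))) x))
     = (\<lambda>(a, b, c). of_real (C * sin b) * (Rf \<Lambda> w a b c l m * cnj (Rf \<Lambda> w a b c l' m'))) x"
      unfolding x prod.case by (rule expand[symmetric])
  qed
  ultimately show ?thesis by simp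
qed



lemma pair_value:
  assumes norms: "\<forall>l\<le>\<Lambda>. (\<Sum>h\<in>{- int l..int l}. (cmod (w (l, h)))\<^sup>2) = (2 * real l + 1) / (real \<Lambda> + 1)\<^sup>2"
    and lL: "l \<le> \<Lambda>" "l' \<le> \<Lambda>" and ml: "\<bar>m\<bar> \<le> int l" "\<bar>m'\<bar> \<le> int l'"
    and C: "C = (real \<Lambda> + 1)\<^sup>2 / (8 * pi\<^sup>2)"
  shows "(\<Sum>h\<in>{- int l..int l}. \<Sum>h'\<in>{- int l'..int l'}.
        (of_real C * w (l, h) * cnj (w (l', h'))) *
        ((if m = m' then 2 * of_real pi else 0) *
         of_real (integral {0..pi} (\<lambda>b. sin b * X \<Lambda> l m h b * X \<Lambda> l' m' h' b)) *
         (if h = h' then 2 * of_real pi else 0))) = (if (l, m) = (l', m') then 1 else (0::complex))"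
proof (cases "m = m'")
  case False then show ?thesis by simp
next
  case True
  define T where "T h = of_real C * w (l, h) * cnj (w (l', h)) * (2 * of_real pi * of_real (Jint (X \<Lambda> l m) (X \<Lambda> l' m) h) * (2 * of_real pi))" for h
  have inner: "(\<Sum>h'\<in>{- int l'..int l'}.
        (of_real C * w (l, h) * cnj (w (l', h'))) *
        ((if m = m' then 2 * of_real pi else 0) *
         of_real (integral {0..pi} (\<lambda>b. sin b * X \<Lambda> l m h b * X \<Lambda> l' m' h' b)) *
         (if h = h' then 2 * of_real pi else 0))) = (if h \<in> {- int l'..int l'} then T h else 0)" for h
  proof -
    have "(\<Sum>h'\<in>{- int l'..int l'}.
        (of_real C * w (l, h) * cnj (w (l', h'))) *
        ((if m = m' then 2 * of_real pi else 0) *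
         of_real (integral {0..pi} (\<lambda>b. sin b * X \<Lambda> l m h b * X \<Lambda> l' m' h' b)) *
         (if h = h' then 2 * of_real pi else 0)))
       = (\<Sum>h'\<in>{- int l'..int l'}. if h' = h then T h else 0)"
      by (intro sum.cong refl) (auto simp: T_def Jint_def True)
    also have "\<dots> = (if h \<in> {- int l'..int l'} then T h else 0)"
      by (simp add: sum.delta')
    finally show ?thesis .
  qed
  show ?thesis
  proof (cases "l = l'")
    case False
    have "T h = 0" if "h \<in> {- int l..int l}" "h \<in> {- int l'..int l'}" for h
      using X_Jcross[OF lL False ml(1) _ _ _] ml True that by (auto simp: T_def)
    then have "(\<Sum>h\<in>{- int l..int l}. if h \<in> {- int l'..int l'} then T h else 0) = 0"
      by (intro sum.neutral) auto
    then show ?thesis using False by (simp only: inner) simp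
  next
    case ll: True
    have "(\<Sum>h\<in>{- int l..int l}. if h \<in> {- int l'..int l'} then T h else 0) = (\<Sum>h\<in>{- int l..int l}. T h)"
      using ll by simp
    also have "\<dots> = (\<Sum>h\<in>{- int l..int l}. of_real (C * (cmod (w (l, h)))\<^sup>2 * (4 * pi\<^sup>2 * (2 / (2 * real l + 1)))))"
    proof (intro sum.cong refl)
      fix h assume h: "h \<in> {- int l..int l}"
      have "Jint (X \<Lambda> l m) (X \<Lambda> l m) h = 2 / (2 * real l + 1)" by (rule X_Jnorm[OF lL(1) ml(1) h])
      then have "T h = of_real C * (w (l, h) * cnj (w (l, h))) * (2 * of_real pi * of_real (2 / (2 * real l + 1)) * (2 * of_real pi))"
        unfolding T_def using ll by (simp add: mult_ac)
      also have "\<dots> = of_real C * of_real ((cmod (w (l, h)))\<^sup>2) * (2 * of_real pi * of_real (2 / (2 * real l + 1)) * (2 * of_real pi))"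
        by (simp only: complex_norm_square)
      also have "\<dots> = of_real (C * (cmod (w (l, h)))\<^sup>2 * (4 * pi\<^sup>2 * (2 / (2 * real l + 1))))"
        by (simp add: power2_eq_square field_simps)
      finally show "T h = of_real (C * (cmod (w (l, h)))\<^sup>2 * (4 * pi\<^sup>2 * (2 / (2 * real l + 1))))" .
    qed
    also have "\<dots> = of_real (\<Sum>h\<in>{- int l..int l}. C * (cmod (w (l, h)))\<^sup>2 * (4 * pi\<^sup>2 * (2 / (2 * real l + 1))))"
      by (simp only: of_real_sum)
    also have "(\<Sum>h\<in>{- int l..int l}. C * (cmod (w (l, h)))\<^sup>2 * (4 * pi\<^sup>2 * (2 / (2 * real l + 1))))
        = C * (\<Sum>h\<in>{- int l..int l}. (cmod (w (l, h)))\<^sup>2) * (4 * pi\<^sup>2 * (2 / (2 * real l + 1)))"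
      by (simp only: sum_distrib_left sum_distrib_right)
    also have "\<dots> = 1"
    proof -
      have "C * (\<Sum>h\<in>{- int l..int l}. (cmod (w (l, h)))\<^sup>2) * (4 * pi\<^sup>2 * (2 / (2 * real l + 1))) = 1"
      proof -
        have n: "(\<Sum>h\<in>{- int l..int l}. (cmod (w (l, h)))\<^sup>2) = (2 * real l + 1) / (real \<Lambda> + 1)\<^sup>2"
          using norms lL(1) by simp
        have nz: "pi \<noteq> 0" "2 * real l + 1 \<noteq> 0" "real \<Lambda> + 1 \<noteq> 0" by auto
        have gen: "a / (8 * p) * (q / a) * (4 * p * (2 / q)) = (1::real)" if "a \<noteq> 0" "p \<noteq> 0" "q \<noteq> 0" for a p q
          using that by (simp add: field_simps)
        show ?thesis unfolding C n by (rule gen) (use nz in auto)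
      qed
      then show ?thesis by (metis of_real_1)
    qed
    finally have fin: "(\<Sum>h\<in>{- int l..int l}. if h \<in> {- int l'..int l'} then T h else 0) = 1" by simp
    show ?thesis unfolding inner using fin ll True by simp
  qed
qed



lemma sg_diff: "sg (m - h) = sg m * sg h"
  unfolding sg_def
  by (simp add: power_int_diff power_int_minus_one_minus divide_inverse power_int_minus[symmetric])

lemma ee_pi: "ee n (pi - x) = of_real (sg n) * ee (- n) x"
proof -
  have "ee n (pi - x) = exp (of_int n * (\<i> * of_real pi)) * ee (- n) x"
    unfolding ee_def by (simp add: exp_add[symmetric] algebra_simps)
  also have "exp (of_int n * (\<i> * of_real pi)) = exp (\<i> * of_real pi) powi n"
    by (rule exp_power_int[symmetric])
  also have "\<dots> = of_real (sg n)" by (simp add: sg_def)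
  finally show ?thesis .
qed

lemma ee_2pi: "ee n (y + 2 * pi) = ee n y"
proof -
  have "ee n (y + 2 * pi) = ee n y * exp (\<i> * (of_int n * (of_real pi * 2)))"
    unfolding ee_def by (simp add: exp_add[symmetric] algebra_simps)
  then show ?thesis by simp
qed

definition fl :: "real \<Rightarrow> real" where "fl x = (if x \<le> pi then pi - x else 3 * pi - x)"

lemma ee_fl: "ee n (fl x) = of_real (sg n) * ee (- n) x"
proof (cases "x \<le> pi")
  case True then show ?thesis by (simp add: fl_def ee_pi)
next
  case False
  have "fl x = (pi - x) + 2 * pi" using False by (simp add: fl_def)
  then show ?thesis by (simp only: ee_2pi ee_pi)
qed

lemma fl_range: "x \<in> {0..<2*pi} \<Longrightarrow> fl x \<in> {0..<2*pi}"
  by (auto simp: fl_def)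

lemma sum_neg_int: "(\<Sum>h\<in>{- int l..int l}. g h) = (\<Sum>h\<in>{- int l..int l}. g (- h))"
  by (rule sum.reindex_bij_witness[of _ uminus uminus]) auto

lemma Rf_flip:
  assumes sym: "\<forall>l h. w (l, h) = w (l, - h)" and lL: "l \<le> \<Lambda>" and ml: "\<bar>m\<bar> \<le> int l"
  shows "Rf \<Lambda> w a b c l (- m) = Rf \<Lambda> w (fl a) b (fl c) l m"
proof -
  have "Rf \<Lambda> w a b c l (- m) = ee (- m) a * (\<Sum>h\<in>{- int l..int l}. ee (- h) c * w (l, - h) * of_real (X \<Lambda> l (- m) (- h) b))"
    unfolding Rf_ee by (subst sum_neg_int) simp
  also have "\<dots> = ee (- m) a * (\<Sum>h\<in>{- int l..int l}. ee (- h) c * w (l, h) * of_real (sg m * sg h * X \<Lambda> l m h b))"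
    using X_sym[OF lL ml] sym by (intro arg_cong2[where f = "(*)"] sum.cong refl) (simp_all add: sg_diff)
  also have "\<dots> = Rf \<Lambda> w (fl a) b (fl c) l m"
    unfolding Rf_ee ee_fl by (simp add: sum_distrib_left mult_ac)
  finally show ?thesis .
qed

lemma Uop_repr:
  assumes w: "w \<in> HS \<Lambda>" and sym: "\<forall>l h. w (l, h) = w (l, - h)"
  shows "Uop (repr \<Lambda> a b c w) = repr \<Lambda> (fl a) b (fl c) w"
proof
  fix i :: "nat \<times> int"
  obtain l m where i: "i = (l, m)" by (cases i)
  have idx: "(l, - m) \<in> Idx \<Lambda> \<longleftrightarrow> (l, m) \<in> Idx \<Lambda>" by (auto simp: Idx_def)
  show "Uop (repr \<Lambda> a b c w) i = repr \<Lambda> (fl a) b (fl c) w i"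
  proof (cases "(l, m) \<in> Idx \<Lambda>")
    case True
    then have "l \<le> \<Lambda>" "\<bar>m\<bar> \<le> int l" by (auto simp: Idx_def)
    then show ?thesis using True idx
      by (simp add: i Uop_def repr_formula[OF w] Rf_flip[OF sym])
  next
    case False
    then show ?thesis using idx by (simp add: i Uop_def repr_formula[OF w])
  qed
qed

lemma part1:
  assumes omega_in: "\<omega> \<in> HS \<Lambda>"
    and norms: "\<forall>l\<le>\<Lambda>. (\<Sum>h\<in>{- int l..int l}. (cmod (\<omega> (l, h)))\<^sup>2) = (2 * real l + 1) / (real \<Lambda> + 1)\<^sup>2"
    and v: "v \<in> HS \<Lambda>"
  shows "((\<lambda>(\<phi>, \<theta>, \<psi>). complex_of_real ((real \<Lambda> + 1)\<^sup>2 / (8 * pi\<^sup>2) * sin \<theta>)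
                 * (repr \<Lambda> \<phi> \<theta> \<psi> \<omega> i * inprod \<Lambda> (repr \<Lambda> \<phi> \<theta> \<psi> \<omega>) v))
              has_integral v i) euler_angles"
proof -
  define C where "C = (real \<Lambda> + 1)\<^sup>2 / (8 * pi\<^sup>2)"
  obtain l m where i: "i = (l, m)" by (cases i)
  show ?thesis
  proof (cases "(l, m) \<in> Idx \<Lambda>")
    case False
    have "(\<lambda>(\<phi>, \<theta>, \<psi>). complex_of_real ((real \<Lambda> + 1)\<^sup>2 / (8 * pi\<^sup>2) * sin \<theta>)
                 * (repr \<Lambda> \<phi> \<theta> \<psi> \<omega> i * inprod \<Lambda> (repr \<Lambda> \<phi> \<theta> \<psi> \<omega>) v)) = (\<lambda>x. 0)"
      using False by (auto simp: fun_eq_iff i repr_formula[OF omega_in])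
    moreover have "v i = 0" using False v by (simp add: HS_def i)
    ultimately show ?thesis by simp
  next
    case True
    then have lm: "l \<le> \<Lambda>" "\<bar>m\<bar> \<le> int l" by (auto simp: Idx_def)
    have pj: "((\<lambda>(a, b, c). of_real (C * sin b) * (Rf \<Lambda> \<omega> a b c l m * cnj (Rf \<Lambda> \<omega> a b c (fst j) (snd j))))
              has_integral (if (l, m) = j then 1 else 0)) euler_angles" if j: "j \<in> Idx \<Lambda>" for j
    proof -
      obtain l' m' where jj: "j = (l', m')" by (cases j)
      have lm': "l' \<le> \<Lambda>" "\<bar>m'\<bar> \<le> int l'" using j by (auto simp: Idx_def jj)
      show ?thesis
        using pair_integral[OF lm(1) lm'(1) lm(2) lm'(2), of C \<omega>]
        unfolding pair_value[OF norms lm(1) lm'(1) lm(2) lm'(2) C_def] jj by simp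
    qed
    have "((\<lambda>x. \<Sum>j\<in>Idx \<Lambda>. v j * (\<lambda>(a, b, c). of_real (C * sin b) * (Rf \<Lambda> \<omega> a b c l m * cnj (Rf \<Lambda> \<omega> a b c (fst j) (snd j)))) x)
          has_integral (\<Sum>j\<in>Idx \<Lambda>. v j * (if (l, m) = j then 1 else 0))) euler_angles"
      by (intro has_integral_sum finite_Idx has_integral_mult_right pj)
    moreover have "(\<Sum>j\<in>Idx \<Lambda>. v j * (if (l, m) = j then 1 else 0)) = v i"
    proof -
      have "(\<Sum>j\<in>Idx \<Lambda>. v j * (if (l, m) = j then 1 else 0)) = (\<Sum>j\<in>Idx \<Lambda>. if (l, m) = j then v j else 0)"
        by (intro sum.cong) auto
      also have "\<dots> = v i" using True finite_Idx[of \<Lambda>] by (simp add: sum.delta' i)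
      finally show ?thesis .
    qed
    moreover have "(\<lambda>x. \<Sum>j\<in>Idx \<Lambda>. v j * (\<lambda>(a, b, c). of_real (C * sin b) * (Rf \<Lambda> \<omega> a b c l m * cnj (Rf \<Lambda> \<omega> a b c (fst j) (snd j)))) x)
       = (\<lambda>(\<phi>, \<theta>, \<psi>). complex_of_real ((real \<Lambda> + 1)\<^sup>2 / (8 * pi\<^sup>2) * sin \<theta>)
                 * (repr \<Lambda> \<phi> \<theta> \<psi> \<omega> i * inprod \<Lambda> (repr \<Lambda> \<phi> \<theta> \<psi> \<omega>) v))"
    proof (rule ext)
      fix x :: "real \<times> real \<times> real"
      obtain a b c where x: "x = (a, b, c)" by (cases x) auto
      have "inprod \<Lambda> (repr \<Lambda> a b c \<omega>) v = (\<Sum>j\<in>Idx \<Lambda>. cnj (Rf \<Lambda> \<omega> a b c (fst j) (snd j)) * v j)"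
        unfolding inprod_def
        by (intro sum.cong refl) (auto simp: repr_formula[OF omega_in])
      then show "(\<Sum>j\<in>Idx \<Lambda>. v j * (\<lambda>(a, b, c). of_real (C * sin b) * (Rf \<Lambda> \<omega> a b c l m * cnj (Rf \<Lambda> \<omega> a b c (fst j) (snd j)))) x)
        = (\<lambda>(\<phi>, \<theta>, \<psi>). complex_of_real ((real \<Lambda> + 1)\<^sup>2 / (8 * pi\<^sup>2) * sin \<theta>)
                 * (repr \<Lambda> \<phi> \<theta> \<psi> \<omega> i * inprod \<Lambda> (repr \<Lambda> \<phi> \<theta> \<psi> \<omega>) v)) x"
        using True by (simp add: x i C_def repr_formula[OF omega_in] sum_distrib_left sum_divide_distrib mult_ac)
    qed
    ultimately show ?thesis by simp
  qed
qed

theorem theorem3: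
  fixes \<Lambda> :: nat and \<omega> :: vec
  assumes omega_in: "\<omega> \<in> HS \<Lambda>"
    and norms: "\<forall>l\<le>\<Lambda>. (\<Sum>h\<in>{- int l..int l}. (cmod (\<omega> (l, h)))\<^sup>2)
                    = (2 * real l + 1) / (real \<Lambda> + 1)\<^sup>2"
  shows "(\<forall>v\<in>HS \<Lambda>. \<forall>i.
            ((\<lambda>(\<phi>, \<theta>, \<psi>). complex_of_real ((real \<Lambda> + 1)\<^sup>2 / (8 * pi\<^sup>2) * sin \<theta>)
                 * (repr \<Lambda> \<phi> \<theta> \<psi> \<omega> i * inprod \<Lambda> (repr \<Lambda> \<phi> \<theta> \<psi> \<omega>) v))
              has_integral v i) euler_angles)
       \<and> ((\<forall>l h. \<omega> (l, h) = \<omega> (l, - h)) \<longrightarrow>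
            (\<forall>(\<phi>, \<theta>, \<psi>)\<in>euler_angles. \<exists>(\<phi>', \<theta>', \<psi>')\<in>euler_angles.
               Uop (repr \<Lambda> \<phi> \<theta> \<psi> \<omega>) = repr \<Lambda> \<phi>' \<theta>' \<psi>' \<omega>))"
proof (intro conjI ballI allI impI)
  fix v i assume "v \<in> HS \<Lambda>"
  then show "((\<lambda>(\<phi>, \<theta>, \<psi>). complex_of_real ((real \<Lambda> + 1)\<^sup>2 / (8 * pi\<^sup>2) * sin \<theta>)
                 * (repr \<Lambda> \<phi> \<theta> \<psi> \<omega> i * inprod \<Lambda> (repr \<Lambda> \<phi> \<theta> \<psi> \<omega>) v))
              has_integral v i) euler_angles"
    by (rule part1[OF omega_in norms])
next
  fix x assume sym: "\<forall>l h. \<omega> (l, h) = \<omega> (l, - h)" and x: "x \<in> euler_angles"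
  obtain a b c where abc: "x = (a, b, c)" by (cases x) auto
  have "(fl a, b, fl c) \<in> euler_angles" using x fl_range by (auto simp: abc euler_angles_def)
  moreover have "Uop (repr \<Lambda> a b c \<omega>) = repr \<Lambda> (fl a) b (fl c) \<omega>" by (rule Uop_repr[OF omega_in sym])
  ultimately show "case x of (\<phi>, \<theta>, \<psi>) \<Rightarrow> \<exists>(\<phi>', \<theta>', \<psi>')\<in>euler_angles. Uop (repr \<Lambda> \<phi> \<theta> \<psi> \<omega>) = repr \<Lambda> \<phi>' \<theta>' \<psi>' \<omega>"
    unfolding abc by auto
qed


end
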